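(* Let $n\ge2$. The standard brackets, i.e. the brackets $[[x_1,\dots,x_n],y_1,\dots,y_{n-1}]$ with $\{x_i\}\cup\{y_j\}=[2n-1]$, $x_1<\dots<x_n$, $y_1<\dots<y_{n-1}$ and $x_j<y_j$ for all $j\in[n-1]$, form a basis of $\rho_{n,3}$. In particular $\dim\rho_{n,3}$ equals the number of standard Young tableaux of shape $2^{n-1}1$.
   Context: All vector spaces are over $\mathbb C$. A Lie algebra of the $n$-th kind (LAnKe) is a vector space with an $n$-linear antisymmetric bracket satisfying the generalized Jacobi identity $[[x_1,\dots,x_n],y_1,\dots,y_{n-1}]=\sum_{i=1}^n(-1)^{n-i}[[y_1,\dots,y_{n-1},x_i],x_1,\dots,\widehat{x_i},\dots,x_n]$. $\rho_{n,3}$ is the representation of $S_{2n-1}$ on the multilinear component of the free LAnKe on generators $1,\dots,2n-1$ consisting of the span of bracketings with two $n$-brackets in which each generator appears exactly once; every such element can be written as a left comb $[[x_1,\dots,x_n],y_1,\dots,y_{n-1}]$. *)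

theory Defs
  imports Complex_Main "HOL-Library.Function_Algebras"
begin

text \<open>A left comb [[x_1,...,x_n],y_1,...,y_(n-1)] is represented by the pair of lists (xs, ys).\<close>
type_synonym comb = "nat list \<times> nat list"

text \<open>Vectors of the free vector space on combs: finitely supported functions comb => complex.\<close>
type_synonym cvec = "comb \<Rightarrow> complex"

definition sc :: "complex \<Rightarrow> cvec \<Rightarrow> cvec" where
  "sc c f = (\<lambda>x. c * f x)"

definition valid_comb :: "nat \<Rightarrow> comb \<Rightarrow> bool" where
  "valid_comb n c \<longleftrightarrow> length (fst c) = n \<and> length (snd c) = n - 1 \<and>
     distinct (fst c @ snd c) \<and> set (fst c @ snd c) = {1..2*n-1}"

definition ind :: "comb \<Rightarrow> cvec" where
  "ind c = (\<lambda>d. if d = c then 1 else 0)"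

definition swap_pos :: "nat list \<Rightarrow> nat \<Rightarrow> nat \<Rightarrow> nat list" where
  "swap_pos xs i j = xs[i := xs ! j, j := xs ! i]"

definition remove_nth :: "nat \<Rightarrow> nat list \<Rightarrow> nat list" where
  "remove_nth i xs = take i xs @ drop (Suc i) xs"

definition combs_space :: "nat \<Rightarrow> cvec set" where
  "combs_space n = ind ` {c. valid_comb n c}"

text \<open>Defining relations of the free LAnKe in this component:
  antisymmetry of the inner bracket, antisymmetry of the outer bracket
  (among the y's; moving the inner bracket is absorbed by writing everything
  as left combs), and the generalized Jacobi identity.\<close>
definition relations :: "nat \<Rightarrow> cvec set" where
  "relations n =
     {ind (swap_pos xs i j, ys) + ind (xs, ys) | xs ys i j.
        valid_comb n (xs, ys) \<and> i < j \<and> j < n} \<union>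
     {ind (xs, swap_pos ys i j) + ind (xs, ys) | xs ys i j.
        valid_comb n (xs, ys) \<and> i < j \<and> j < n - 1} \<union>
     {ind (xs, ys) - (\<Sum>i<n. sc ((-1) ^ (n - 1 - i)) (ind (ys @ [xs ! i], remove_nth i xs)))
        | xs ys. valid_comb n (xs, ys)}"

definition standard_comb :: "nat \<Rightarrow> comb \<Rightarrow> bool" where
  "standard_comb n c \<longleftrightarrow> valid_comb n c \<and> sorted_wrt (<) (fst c) \<and> sorted_wrt (<) (snd c) \<and>
     (\<forall>j < n - 1. fst c ! j < snd c ! j)"

text \<open>rho_{n,3} is span(combs_space n) / span(relations n); its dimension.\<close>
definition rho_dim :: "nat \<Rightarrow> nat" where
  "rho_dim n = vector_space.dim sc (combs_space n) - vector_space.dim sc (relations n)"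

text \<open>Young diagram of a partition (English notation, rows indexed by r, columns by c)
  and standard Young tableaux.\<close>
definition young_cells :: "nat list \<Rightarrow> (nat \<times> nat) set" where
  "young_cells la = {(r, c). r < length la \<and> c < la ! r}"

definition SYT :: "nat list \<Rightarrow> ((nat \<times> nat) \<Rightarrow> nat) set" where
  "SYT la = {T. bij_betw T (young_cells la) {1..sum_list la} \<and>
     (\<forall>x. x \<notin> young_cells la \<longrightarrow> T x = 0) \<and>
     (\<forall>r c. (r, c) \<in> young_cells la \<and> (r, Suc c) \<in> young_cells la \<longrightarrow> T (r, c) < T (r, Suc c)) \<and>
     (\<forall>r c. (r, c) \<in> young_cells la \<and> (Suc r, c) \<in> young_cells la \<longrightarrow> T (r, c) < T (Suc r, c))}"

end

theory Submission
  imports Defs "HOL-Combinatorics.Permutations"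
begin


fun invc :: "nat list \<Rightarrow> nat" where
  "invc [] = 0"
| "invc (a # l) = length (filter (\<lambda>b. b < a) l) + invc l"

lemma inv_append_single: "invc (ys @ [x]) = invc ys + length (filter (\<lambda>y. x < y) ys)"
  by (induction ys) auto

lemma inv_remove:
  "invc (a @ x # b) = invc (a @ b) + length (filter (\<lambda>u. x < u) a) + length (filter (\<lambda>u. u < x) b)"
  by (induction a) auto

lemma length_filter_perm: "mset l = mset l' \<Longrightarrow> length (filter P l) = length (filter P l')"
  by (metis mset_filter size_mset)

lemma mset_swap_pos: "i < length l \<Longrightarrow> j < length l \<Longrightarrow> mset (swap_pos l i j) = mset l"
  unfolding swap_pos_def by (simp add: mset_swap)

lemma swap_pos_Cons: "swap_pos (a # l) (Suc i) (Suc j) = a # swap_pos l i j"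
  unfolding swap_pos_def by simp

lemma inv_swap_adj:
  assumes "Suc i < length l" "l ! i > l ! Suc i"
  shows "Suc (invc (swap_pos l i (Suc i))) = invc l"
  using assms
proof (induction l arbitrary: i)
  case Nil then show ?case by simp
next
  case (Cons a l)
  show ?case
  proof (cases i)
    case 0
    then obtain b l' where l: "l = b # l'" using Cons by (cases l) auto
    have "swap_pos (a # l) i (Suc i) = b # a # l'" using 0 l unfolding swap_pos_def by simp
    then show ?thesis using Cons.prems 0 l by auto
  next
    case (Suc k)
    have 1: "Suc (invc (swap_pos l k (Suc k))) = invc l" using Cons Suc by auto
    have "length (filter (\<lambda>b. b < a) (swap_pos l k (Suc k))) = length (filter (\<lambda>b. b < a) l)"
      by (rule length_filter_perm, rule mset_swap_pos) (use Cons Suc in auto)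
    then show ?thesis using 1 Suc by (simp add: swap_pos_Cons)
  qed
qed

lemma inv_zero_sorted: "invc l = 0 \<Longrightarrow> sorted l"
proof (induction l)
  case (Cons a l)
  then have "\<forall>b\<in>set l. a \<le> b" by (auto simp: filter_empty_conv)
  then show ?case using Cons by auto
qed simp

lemma sorted_inv_zero: "sorted l \<Longrightarrow> invc l = 0"
proof (induction l)
  case (Cons a l)
  then show ?case by (auto simp: filter_empty_conv)
qed simp

lemma not_sorted_descent:
  assumes "\<not> sorted l"
  shows "\<exists>i. Suc i < length l \<and> l ! i > l ! Suc i"
  using assms by (metis not_le sorted_iff_nth_Suc)

definition perm_of :: "nat list \<Rightarrow> nat \<Rightarrow> nat" where
  "perm_of l i = (if i < length l then card {u \<in> set l. u < l ! i} else i)"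

lemma rank_lt: "v \<in> set (l::nat list) \<Longrightarrow> card {u \<in> set l. u < v} < card (set l)"
proof -
  assume v: "v \<in> set l"
  have "v \<notin> {u \<in> set l. u < v}" by simp
  then have "{u \<in> set l. u < v} \<subset> set l" using v by blast
  then show ?thesis by (simp add: psubset_card_mono)
qed

lemma rank_inj:
  assumes "v \<in> set (l::nat list)" "w \<in> set l" "card {u \<in> set l. u < v} = card {u \<in> set l. u < w}"
  shows "v = w"
proof (rule ccontr)
  assume "v \<noteq> w"
  then consider "v < w" | "w < v" by (meson linorder_neqE_nat)
  then show False
  proof cases
    case 1
    have "card {u \<in> set l. u < v} < card {u \<in> set l. u < w}"
      by (rule psubset_card_mono) (use 1 assms in auto)
    then show False using assms by simp
  next
    case 2
    have "card {u \<in> set l. u < w} < card {u \<in> set l. u < v}"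
      by (rule psubset_card_mono) (use 2 assms in auto)
    then show False using assms by simp
  qed
qed

lemma perm_of_permutes:
  assumes "distinct l"
  shows "perm_of l permutes {..<length l}"
proof (rule bij_imp_permutes)
  have inj: "inj_on (perm_of l) {..<length l}"
  proof (rule inj_onI)
    fix i j assume ij: "i \<in> {..<length l}" "j \<in> {..<length l}" "perm_of l i = perm_of l j"
    then have "l ! i = l ! j" using rank_inj[of "l!i" l "l!j"] by (auto simp: perm_of_def)
    then show "i = j" using ij assms by (simp add: nth_eq_iff_index_eq)
  qed
  have sub: "perm_of l ` {..<length l} \<subseteq> {..<length l}"
  proof
    fix y assume "y \<in> perm_of l ` {..<length l}"
    then obtain x where x: "x < length l" "y = perm_of l x" by auto
    have "card {u \<in> set l. u < l ! x} < card (set l)" using rank_lt[of "l ! x" l] x by simp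
    then show "y \<in> {..<length l}" using x assms by (simp add: perm_of_def distinct_card)
  qed
  show "bij_betw (perm_of l) {..<length l} {..<length l}"
    using inj endo_inj_surj[OF _ sub inj] by (simp add: bij_betw_def)
  show "\<And>x. x \<notin> {..<length l} \<Longrightarrow> perm_of l x = x" by (simp add: perm_of_def)
qed

lemma perm_of_permutation: "distinct l \<Longrightarrow> permutation (perm_of l)"
  using perm_of_permutes permutes_imp_permutation by blast

lemma swap_pos_nth:
  assumes "i < length l" "j < length l" "k < length l"
  shows "swap_pos l i j ! k = l ! (Transposition.transpose i j k)"
  using assms unfolding swap_pos_def by (auto simp: nth_list_update transpose_def)

lemma set_swap_pos: "i < length l \<Longrightarrow> j < length l \<Longrightarrow> set (swap_pos l i j) = set l"
  by (metis mset_swap_pos set_mset_mset)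

lemma perm_of_swap:
  assumes "i < length l" "j < length l"
  shows "perm_of (swap_pos l i j) = perm_of l \<circ> Transposition.transpose i j"
proof
  fix k
  have len: "length (swap_pos l i j) = length l" by (simp add: swap_pos_def)
  show "perm_of (swap_pos l i j) k = (perm_of l \<circ> Transposition.transpose i j) k"
  proof (cases "k < length l")
    case True
    then have "Transposition.transpose i j k < length l" using assms by (auto simp: transpose_def)
    then show ?thesis using True assms len
      by (simp add: perm_of_def swap_pos_nth set_swap_pos)
  next
    case False
    then have "Transposition.transpose i j k = k" using assms by (auto simp: transpose_def)
    then show ?thesis using False len by (simp add: perm_of_def)
  qed
qed

lemma sign_perm_of_swap:
  assumes "distinct l" "i < length l" "j < length l" "i \<noteq> j"
  shows "sign (perm_of (swap_pos l i j)) = - sign (perm_of l)"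
  using assms by (simp add: perm_of_swap sign_compose perm_of_permutation permutation_swap_id sign_swap_id)

lemma perm_of_sorted:
  assumes "sorted l" "distinct l"
  shows "perm_of l = id"
proof
  fix k
  show "perm_of l k = id k"
  proof (cases "k < length l")
    case True
    have "{u \<in> set l. u < l ! k} = set (take k l)"
    proof -
      have "{u \<in> set l. u < l ! k} = (\<lambda>i. l ! i) ` {i. i < length l \<and> l ! i < l ! k}"
        by (auto simp: in_set_conv_nth)
      also have "{i. i < length l \<and> l ! i < l ! k} = {..<k}"
      proof -
        have ss: "sorted_wrt (<) l" using assms strict_sorted_iff by blast
        show ?thesis
        proof (intro set_eqI iffI)
          fix i assume "i \<in> {i. i < length l \<and> l ! i < l ! k}"
          then have "i < length l" "l ! i < l ! k" by auto
          then show "i \<in> {..<k}"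
            using sorted_wrt_nth_less[OF ss, of k i] True
            by (metis lessThan_iff less_asym not_less_iff_gr_or_eq)
        next
          fix i assume "i \<in> {..<k}"
          then show "i \<in> {i. i < length l \<and> l ! i < l ! k}"
            using sorted_wrt_nth_less[OF ss, of i k] True by auto
        qed
      qed
      also have "(\<lambda>i. l ! i) ` {..<k} = set (take k l)"
        using True nth_image[of k l] by (simp add: atLeast0LessThan)
      finally show ?thesis .
    qed
    then show ?thesis using True assms by (simp add: perm_of_def distinct_card)
  next
    case False then show ?thesis by (simp add: perm_of_def)
  qed
qed

definition sgnl :: "nat list \<Rightarrow> complex" where
  "sgnl l = (-1) ^ invc l"

lemma sgnl_sign: "distinct l \<Longrightarrow> sgnl l = of_int (sign (perm_of l))"
proof (induction "invc l" arbitrary: l rule: less_induct)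
  case less
  show ?case
  proof (cases "sorted l")
    case True
    then show ?thesis using less by (simp add: sgnl_def sorted_inv_zero perm_of_sorted)
  next
    case False
    then obtain i where i: "Suc i < length l" "l ! i > l ! Suc i" using not_sorted_descent by blast
    define l' where "l' = swap_pos l i (Suc i)"
    have invc': "Suc (invc l') = invc l" using inv_swap_adj[OF i] l'_def by simp
    have d': "distinct l'" using less.prems i unfolding l'_def
      by (simp add: swap_pos_def distinct_swap)
    have IH: "sgnl l' = of_int (sign (perm_of l'))" using less invc' d' by auto
    have "sign (perm_of l') = - sign (perm_of l)"
      unfolding l'_def by (rule sign_perm_of_swap) (use less.prems i in auto)
    then show ?thesis using IH invc'[symmetric] by (simp add: sgnl_def)
  qed
qed

lemma sgnl_swap:
  assumes "distinct l" "i < length l" "j < length l" "i \<noteq> j"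
  shows "sgnl (swap_pos l i j) = - sgnl l"
proof -
  have d: "distinct (swap_pos l i j)" using assms
    by (simp add: swap_pos_def distinct_swap)
  show ?thesis using sgnl_sign[OF d] sgnl_sign[OF assms(1)] sign_perm_of_swap[OF assms] by simp
qed




interpretation M: vector_space sc
  by unfold_locales (auto simp: sc_def fun_eq_iff algebra_simps)

abbreviation SR :: "nat \<Rightarrow> cvec set" where "SR n \<equiv> M.span (relations n)"

definition AA :: "nat \<Rightarrow> nat set" where "AA n = {1..2*n-1}"

definition sl :: "nat set \<Rightarrow> nat list" where "sl X = sorted_list_of_set X"

definition F :: "nat \<Rightarrow> nat set \<Rightarrow> cvec" where
  "F n X = ind (sl X, sl (AA n - X))"

lemma sc_apply[simp]: "sc c f x = c * f x" by (simp add: sc_def)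

lemma valid_swap_fst:
  assumes "valid_comb n (xs, ys)" "i < length xs" "j < length xs"
  shows "valid_comb n (swap_pos xs i j, ys)"
  using assms unfolding valid_comb_def
  by (auto simp: swap_pos_def distinct_swap set_swap_pos[unfolded swap_pos_def])

lemma valid_swap_snd:
  assumes "valid_comb n (xs, ys)" "i < length ys" "j < length ys"
  shows "valid_comb n (xs, swap_pos ys i j)"
  using assms unfolding valid_comb_def
  by (auto simp: swap_pos_def distinct_swap set_swap_pos[unfolded swap_pos_def])

lemma swap_pos_swap_pos: "i < length l \<Longrightarrow> j < length l \<Longrightarrow> swap_pos (swap_pos l i j) i j = l"
  unfolding swap_pos_def by (auto simp: list_eq_iff_nth_eq nth_list_update)

lemma sort_swap_pos: "i < length l \<Longrightarrow> j < length l \<Longrightarrow> sort (swap_pos l i j) = sort l"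
  by (rule properties_for_sort) (simp_all add: mset_swap_pos)

lemma norm_fst:
  assumes "valid_comb n (xs, ys)"
  shows "ind (xs, ys) - sc (sgnl xs) (ind (sort xs, ys)) \<in> SR n"
  using assms
proof (induction "invc xs" arbitrary: xs rule: less_induct)
  case less
  show ?case
  proof (cases "sorted xs")
    case True
    then have "sort xs = xs" by (simp add: sorted_sort_id)
    moreover have "sgnl xs = 1" using True by (simp add: sgnl_def sorted_inv_zero)
    ultimately show ?thesis by (simp add: sc_def M.span_zero)
  next
    case False
    then obtain i where i: "Suc i < length xs" "xs ! i > xs ! Suc i" using not_sorted_descent by blast
    define xs' where "xs' = swap_pos xs i (Suc i)"
    have invc': "Suc (invc xs') = invc xs" using inv_swap_adj[OF i] xs'_def by simp
    have v': "valid_comb n (xs', ys)" unfolding xs'_def by (rule valid_swap_fst) (use less.prems i in auto)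
    have IH: "ind (xs', ys) - sc (sgnl xs') (ind (sort xs', ys)) \<in> SR n"
      using less v' invc' by auto
    have len: "length xs = n" using less.prems by (simp add: valid_comb_def)
    have "ind (swap_pos xs' i (Suc i), ys) + ind (xs', ys) \<in> relations n"
      unfolding relations_def using v' i len by blast
    moreover have "swap_pos xs' i (Suc i) = xs" unfolding xs'_def using i by (simp add: swap_pos_swap_pos)
    ultimately have r: "ind (xs, ys) + ind (xs', ys) \<in> SR n" by (simp add: M.span_base)
    have d: "distinct xs" using less.prems by (simp add: valid_comb_def)
    have s1: "sgnl xs' = - sgnl xs" unfolding xs'_def by (rule sgnl_swap) (use d i in auto)
    have s2: "sort xs' = sort xs" unfolding xs'_def by (rule sort_swap_pos) (use i in auto)
    have eq: "ind (xs, ys) - sc (sgnl xs) (ind (sort xs, ys)) =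
          (ind (xs, ys) + ind (xs', ys)) - (ind (xs', ys) - sc (sgnl xs') (ind (sort xs', ys)))"
      using s1 s2 by (simp add: fun_eq_iff sc_def)
    show ?thesis by (subst eq) (rule M.span_diff[OF r IH])
  qed
qed

lemma rel_fst: "valid_comb n (xs, ys) \<Longrightarrow> i < j \<Longrightarrow> j < n \<Longrightarrow>
    ind (swap_pos xs i j, ys) + ind (xs, ys) \<in> relations n"
  unfolding relations_def by blast

lemma rel_snd: "valid_comb n (xs, ys) \<Longrightarrow> i < j \<Longrightarrow> j < n - 1 \<Longrightarrow>
    ind (xs, swap_pos ys i j) + ind (xs, ys) \<in> relations n"
  unfolding relations_def by blast

lemma norm_snd:
  assumes "valid_comb n (xs, ys)"
  shows "ind (xs, ys) - sc (sgnl ys) (ind (xs, sort ys)) \<in> SR n"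
  using assms
proof (induction "invc ys" arbitrary: ys rule: less_induct)
  case less
  show ?case
  proof (cases "sorted ys")
    case True
    then have "sort ys = ys" by (simp add: sorted_sort_id)
    moreover have "sgnl ys = 1" using True by (simp add: sgnl_def sorted_inv_zero)
    ultimately show ?thesis by (simp add: sc_def M.span_zero)
  next
    case False
    then obtain i where i: "Suc i < length ys" "ys ! i > ys ! Suc i" using not_sorted_descent by blast
    define ys' where "ys' = swap_pos ys i (Suc i)"
    have invc': "Suc (invc ys') = invc ys" using inv_swap_adj[OF i] ys'_def by simp
    have v': "valid_comb n (xs, ys')" unfolding ys'_def by (rule valid_swap_snd) (use less.prems i in auto)
    have IH: "ind (xs, ys') - sc (sgnl ys') (ind (xs, sort ys')) \<in> SR n"
      using less v' invc' by auto
    have len: "length ys = n - 1" using less.prems by (simp add: valid_comb_def)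
    have "ind (xs, swap_pos ys' i (Suc i)) + ind (xs, ys') \<in> relations n"
      by (rule rel_snd[OF v']) (use i len in auto)
    moreover have "swap_pos ys' i (Suc i) = ys" unfolding ys'_def using i by (simp add: swap_pos_swap_pos)
    ultimately have r: "ind (xs, ys) + ind (xs, ys') \<in> SR n" by (simp add: M.span_base)
    have d: "distinct ys" using less.prems by (simp add: valid_comb_def)
    have s1: "sgnl ys' = - sgnl ys" unfolding ys'_def by (rule sgnl_swap) (use d i in auto)
    have s2: "sort ys' = sort ys" unfolding ys'_def by (rule sort_swap_pos) (use i in auto)
    have eq: "ind (xs, ys) - sc (sgnl ys) (ind (xs, sort ys)) =
          (ind (xs, ys) + ind (xs, ys')) - (ind (xs, ys') - sc (sgnl ys') (ind (xs, sort ys')))"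
      using s1 s2 by (simp add: fun_eq_iff sc_def)
    show ?thesis by (subst eq) (rule M.span_diff[OF r IH])
  qed
qed

lemma valid_sort_fst: "valid_comb n (xs, ys) \<Longrightarrow> valid_comb n (sort xs, ys)"
  unfolding valid_comb_def by auto

lemma valid_set_snd: "valid_comb n (xs, ys) \<Longrightarrow> set ys = AA n - set xs"
  unfolding valid_comb_def AA_def by auto

lemma valid_set_fst: "valid_comb n (xs, ys) \<Longrightarrow> set xs \<subseteq> AA n"
  unfolding valid_comb_def AA_def by auto

lemma sort_distinct_sl: "distinct xs \<Longrightarrow> sort xs = sl (set xs)"
  by (simp add: sl_def sorted_list_of_set_sort_remdups distinct_remdups_id)

lemma norm_comb:
  assumes "valid_comb n (xs, ys)"
  shows "ind (xs, ys) - sc (sgnl xs * sgnl ys) (F n (set xs)) \<in> SR n"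
proof -
  have a: "ind (xs, ys) - sc (sgnl xs) (ind (sort xs, ys)) \<in> SR n" by (rule norm_fst[OF assms])
  have b: "ind (sort xs, ys) - sc (sgnl ys) (ind (sort xs, sort ys)) \<in> SR n"
    by (rule norm_snd[OF valid_sort_fst[OF assms]])
  have d: "distinct xs" "distinct ys" using assms by (auto simp: valid_comb_def)
  have f: "ind (sort xs, sort ys) = F n (set xs)"
    unfolding F_def using d valid_set_snd[OF assms] by (simp add: sort_distinct_sl)
  have eq: "ind (xs, ys) - sc (sgnl xs * sgnl ys) (ind (sort xs, sort ys)) =
     (ind (xs, ys) - sc (sgnl xs) (ind (sort xs, ys))) + sc (sgnl xs) (ind (sort xs, ys) - sc (sgnl ys) (ind (sort xs, sort ys)))"
    by (simp add: fun_eq_iff sc_def algebra_simps)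
  show ?thesis unfolding f[symmetric] by (subst eq) (rule M.span_add[OF a M.span_scale[OF b]])
qed

lemma neg1_pow_eq: "even (a + b) \<Longrightarrow> (-1::complex) ^ a = (-1) ^ b"
proof -
  assume e: "even (a + b)"
  have "(-1::complex) ^ a = (-1) ^ a * ((-1) ^ b * (-1) ^ b)" by (simp flip: power_add)
  also have "\<dots> = (-1) ^ (a + b) * (-1) ^ b" by (simp add: power_add)
  also have "\<dots> = (-1) ^ b" using e by simp
  finally show ?thesis .
qed

lemma remove_nth_decomp:
  assumes "i < length xs"
  shows "xs = take i xs @ xs ! i # drop (Suc i) xs" "remove_nth i xs = take i xs @ drop (Suc i) xs"
  using assms by (simp_all add: id_take_nth_drop remove_nth_def)

lemma jac_term_valid:
  assumes v: "valid_comb n (xs, ys)" and i: "i < n" and n: "n \<ge> 1"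
  shows "valid_comb n (ys @ [xs ! i], remove_nth i xs)"
proof -
  have len: "length xs = n" "length ys = n - 1" using v by (auto simp: valid_comb_def)
  have dec: "xs = take i xs @ xs ! i # drop (Suc i) xs" "remove_nth i xs = take i xs @ drop (Suc i) xs"
    using remove_nth_decomp i len by auto
  have m: "mset ((ys @ [xs ! i]) @ remove_nth i xs) = mset (xs @ ys)"
    by (subst (3) dec(1)) (simp add: dec(2))
  have "distinct ((ys @ [xs ! i]) @ remove_nth i xs)"
    using v m by (metis valid_comb_def fst_conv snd_conv mset_eq_imp_distinct_iff)
  moreover have "set ((ys @ [xs ! i]) @ remove_nth i xs) = set (xs @ ys)"
    using m by (metis set_mset_mset)
  moreover have "length (remove_nth i xs) = n - 1" using len i by (simp add: remove_nth_def)
  ultimately show ?thesis using v len n by (simp add: valid_comb_def)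
qed

lemma jac_sign:
  assumes v: "valid_comb n (xs, ys)" and i: "i < n" and n: "n \<ge> 1"
  shows "(-1) ^ (n - 1 - i) * (sgnl (ys @ [xs ! i]) * sgnl (remove_nth i xs)) =
         sgnl xs * sgnl ys * (-1) ^ Suc (xs ! i)"
proof -
  have len: "length xs = n" "length ys = n - 1" using v by (auto simp: valid_comb_def)
  define x where "x = xs ! i"
  define a where "a = take i xs"
  define b where "b = drop (Suc i) xs"
  have dec: "xs = a @ x # b" "remove_nth i xs = a @ b"
    using remove_nth_decomp i len unfolding a_def b_def x_def by auto
  have dall: "distinct (xs @ ys)" using v by (simp add: valid_comb_def)
  have sall: "set (xs @ ys) = {1..2*n-1}" using v by (simp add: valid_comb_def)
  have lb: "length b = n - 1 - i" using len i unfolding b_def by simp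
  have xb: "x \<notin> set b" using dall dec(1) by auto
  have db: "distinct b" using dall dec(1) by auto
  have split_b: "length b = length (filter (\<lambda>u. u < x) b) + length (filter (\<lambda>u. x < u) b)"
  proof -
    have "length b = length (filter (\<lambda>u. u < x) b) + length (filter (\<lambda>u. \<not> u < x) b)"
      by (simp add: sum_length_filter_compl)
    also have "filter (\<lambda>u. \<not> u < x) b = filter (\<lambda>u. x < u) b"
      using xb by (intro filter_cong) (auto, metis antisym_conv3)
    finally show ?thesis .
  qed
  have cnt: "length (filter (\<lambda>u. x < u) (a @ b @ ys)) = 2*n - 1 - x"
  proof -
    have d: "distinct (a @ b @ ys)" using dall dec(1) by auto
    have st: "set (a @ b @ ys) = {1..2*n-1} - {x}" using sall dall dec(1) by auto
    have "{u. x < u} \<inter> ({1..2*n-1} - {x}) = {Suc x..2*n-1}" by auto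
    then show ?thesis using distinct_length_filter[OF d] st by simp
  qed
  have xle: "x \<le> 2*n-1" using sall dec(1) by (metis in_set_conv_decomp atLeastAtMost_iff Un_iff set_append)
  have i1: "invc xs = invc (a @ b) + length (filter (\<lambda>u. x < u) a) + length (filter (\<lambda>u. u < x) b)"
    by (subst dec(1)) (rule inv_remove)
  have i2: "invc (ys @ [x]) = invc ys + length (filter (\<lambda>y. x < y) ys)" by (rule inv_append_single)
  have "(-1::complex) ^ (n - 1 - i + (invc (ys @ [x]) + invc (remove_nth i xs))) =
        (-1) ^ (invc xs + invc ys + Suc x)"
  proof (rule neg1_pow_eq)
    have "n - 1 - i + (invc (ys @ [x]) + invc (remove_nth i xs)) + (invc xs + invc ys + Suc x)
      = 2 * (invc (a @ b) + invc ys + length (filter (\<lambda>u. u < x) b)) +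
        (length (filter (\<lambda>u. x < u) (a @ b @ ys)) + Suc x)"
      using i1 i2 dec(2) lb split_b by simp
    also have "length (filter (\<lambda>u. x < u) (a @ b @ ys)) + Suc x = 2 * n" using cnt xle n by simp
    finally have eq: "n - 1 - i + (invc (ys @ [x]) + invc (remove_nth i xs)) + (invc xs + invc ys + Suc x)
      = 2 * (invc (a @ b) + invc ys + length (filter (\<lambda>u. u < x) b)) + 2 * n" .
    show "even (n - 1 - i + (invc (ys @ [x]) + invc (remove_nth i xs)) + (invc xs + invc ys + Suc x))"
      by (subst eq) simp
  qed
  then show ?thesis unfolding x_def sgnl_def by (simp add: power_add)
qed

lemma sum_fun_apply: "(\<Sum>i\<in>S. f i) x = (\<Sum>i\<in>S. f i x)"
  by (induction S rule: infinite_finite_induct) auto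

lemma sum_nth_distinct:
  assumes "distinct xs"
  shows "(\<Sum>i<length xs. g (xs ! i)) = (\<Sum>x\<in>set xs. g x)"
proof -
  have "(\<Sum>x\<in>set xs. g x) = sum_list (map g xs)" using assms by (rule sum.distinct_set_conv_list)
  also have "\<dots> = (\<Sum>i<length xs. g (xs ! i))" by (simp add: sum_list_sum_nth atLeast0LessThan)
  finally show ?thesis by simp
qed

lemma sc_sc_one: "a * a = 1 \<Longrightarrow> sc a (sc a v) = v"
  by (simp add: fun_eq_iff sc_def mult.assoc[symmetric])

lemma sgnl_sq: "sgnl l * sgnl l = 1"
  by (simp add: sgnl_def flip: power_add)

lemma rel_jac: "valid_comb n (xs, ys) \<Longrightarrow>
   ind (xs, ys) - (\<Sum>i<n. sc ((-1) ^ (n - 1 - i)) (ind (ys @ [xs ! i], remove_nth i xs))) \<in> relations n"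
  unfolding relations_def by blast

lemma jac_F_valid:
  assumes v: "valid_comb n (xs, ys)" and n: "n \<ge> 1"
  shows "F n (set xs) - (\<Sum>x\<in>set xs. sc ((-1) ^ Suc x) (F n (insert x (AA n - set xs)))) \<in> SR n"
proof -
  define S where "S = sgnl xs * sgnl ys"
  define T where "T i = ind (ys @ [xs ! i], remove_nth i xs)" for i
  define c where "c i = ((-1::complex) ^ (n - 1 - i))" for i
  define s where "s i = sgnl (ys @ [xs ! i]) * sgnl (remove_nth i xs)" for i
  define G where "G i = F n (insert (xs ! i) (AA n - set xs))" for i
  have len: "length xs = n" using v by (simp add: valid_comb_def)
  have d: "distinct xs" using v by (simp add: valid_comb_def)
  have r1: "ind (xs, ys) - (\<Sum>i<n. sc (c i) (T i)) \<in> SR n"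
    unfolding T_def c_def by (rule M.span_base, rule rel_jac[OF v])
  have r2: "ind (xs, ys) - sc S (F n (set xs)) \<in> SR n" unfolding S_def by (rule norm_comb[OF v])
  have r3: "T i - sc (s i) (G i) \<in> SR n" if "i < n" for i
  proof -
    have vt: "valid_comb n (ys @ [xs ! i], remove_nth i xs)" by (rule jac_term_valid[OF v that n])
    have "set (ys @ [xs ! i]) = insert (xs ! i) (AA n - set xs)" using valid_set_snd[OF v] by simp
    then show ?thesis using norm_comb[OF vt] unfolding T_def s_def G_def by simp
  qed
  have r4: "(\<Sum>i<n. sc (c i) (T i - sc (s i) (G i))) \<in> SR n"
    by (rule M.span_sum, rule M.span_scale, rule r3) simp
  have cs: "c i * s i = S * (-1) ^ Suc (xs ! i)" if "i < n" for i
    unfolding c_def s_def S_def using jac_sign[OF v that n] by simp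
  have e1: "(\<Sum>i<n. sc (c i) (T i - sc (s i) (G i))) =
     (\<Sum>i<n. sc (c i) (T i)) - (\<Sum>i<n. sc S (sc ((-1) ^ Suc (xs ! i)) (G i)))"
  proof -
    have "(\<Sum>i<n. sc (c i) (T i - sc (s i) (G i))) = (\<Sum>i<n. sc (c i) (T i) - sc S (sc ((-1) ^ Suc (xs ! i)) (G i)))"
    proof (rule sum.cong)
      fix i assume "i \<in> {..<n}"
      then have "c i * s i = S * (-1) ^ Suc (xs ! i)" using cs by simp
      then show "sc (c i) (T i - sc (s i) (G i)) = sc (c i) (T i) - sc S (sc ((-1) ^ Suc (xs ! i)) (G i))"
        by (simp add: fun_eq_iff sc_def right_diff_distrib mult.assoc[symmetric])
    qed simp
    also have "\<dots> = (\<Sum>i<n. sc (c i) (T i)) - (\<Sum>i<n. sc S (sc ((-1) ^ Suc (xs ! i)) (G i)))"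
      by (rule sum_subtractf)
    finally show ?thesis .
  qed
  have comb: "(\<Sum>i<n. sc (c i) (T i - sc (s i) (G i))) + (ind (xs, ys) - (\<Sum>i<n. sc (c i) (T i)))
      - (ind (xs, ys) - sc S (F n (set xs)))
      = sc S (F n (set xs) - (\<Sum>i<n. sc ((-1) ^ Suc (xs ! i)) (G i)))"
    unfolding e1 by (simp add: fun_eq_iff sum_fun_apply algebra_simps sum_distrib_left)
  have "sc S (F n (set xs) - (\<Sum>i<n. sc ((-1) ^ Suc (xs ! i)) (G i))) \<in> SR n"
    by (subst comb[symmetric]) (rule M.span_diff[OF M.span_add[OF r4 r1] r2])
  then have "sc S (sc S (F n (set xs) - (\<Sum>i<n. sc ((-1) ^ Suc (xs ! i)) (G i)))) \<in> SR n"
    by (rule M.span_scale)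
  moreover have "S * S = 1" unfolding S_def
    by (metis mult.assoc mult.commute sgnl_sq mult_1_right)
  ultimately have "F n (set xs) - (\<Sum>i<n. sc ((-1) ^ Suc (xs ! i)) (G i)) \<in> SR n"
    by (simp only: sc_sc_one)
  moreover have "(\<Sum>i<n. sc ((-1) ^ Suc (xs ! i)) (G i)) =
       (\<Sum>x\<in>set xs. sc ((-1) ^ Suc x) (F n (insert x (AA n - set xs))))"
    unfolding G_def using sum_nth_distinct[OF d, of "\<lambda>x. sc ((-1) ^ Suc x) (F n (insert x (AA n - set xs)))"] len
    by simp
  ultimately show ?thesis by simp
qed

lemma finite_AA[simp]: "finite (AA n)" by (simp add: AA_def)

lemma card_AA: "card (AA n) = 2 * n - 1" by (simp add: AA_def)

lemma sl_props: "finite X \<Longrightarrow> set (sl X) = X \<and> distinct (sl X) \<and> length (sl X) = card X \<and> sorted (sl X)"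
  by (simp add: sl_def)

lemma valid_sl:
  assumes "X \<subseteq> AA n" "card X = n" "n \<ge> 1"
  shows "valid_comb n (sl X, sl (AA n - X))"
proof -
  have fX: "finite X" using finite_subset[OF assms(1)] by simp
  have c: "card (AA n - X) = n - 1" using assms card_AA[of n] by (simp add: card_Diff_subset fX)
  have s1: "set (sl X) = X" "distinct (sl X)" "length (sl X) = n" using sl_props[OF fX] assms by auto
  have s2: "set (sl (AA n - X)) = AA n - X" "distinct (sl (AA n - X))" "length (sl (AA n - X)) = n - 1"
    using sl_props[of "AA n - X"] c by auto
  have u: "X \<union> (AA n - X) = {1..2*n-1}" using assms(1) unfolding AA_def by blast
  have "distinct (sl X @ sl (AA n - X))" using s1 s2 by (simp add: distinct_append)
  then show ?thesis unfolding valid_comb_def using s1 s2 u by simp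
qed

definition Sets :: "nat \<Rightarrow> nat \<Rightarrow> nat set set" where
  "Sets n k = {X. X \<subseteq> AA n \<and> card X = k}"

lemma finite_Sets[simp]: "finite (Sets n k)"
proof -
  have "Sets n k \<subseteq> Pow (AA n)" unfolding Sets_def by auto
  then show ?thesis using finite_subset by (metis finite_AA finite_Pow_iff)
qed

lemma jac_F:
  assumes "X \<in> Sets n n" "n \<ge> 1"
  shows "F n X - (\<Sum>x\<in>X. sc ((-1) ^ Suc x) (F n (insert x (AA n - X)))) \<in> SR n"
proof -
  have fX: "finite X" using assms finite_subset[of X "AA n"] by (auto simp: Sets_def)
  have v: "valid_comb n (sl X, sl (AA n - X))" using valid_sl assms by (auto simp: Sets_def)
  show ?thesis using jac_F_valid[OF v assms(2)] sl_props[OF fX] by simp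
qed

definition E :: "nat \<Rightarrow> nat set \<Rightarrow> cvec" where
  "E n X = sc ((-1) ^ (\<Sum>X)) (F n X)"

definition sig :: "nat \<Rightarrow> complex" where
  "sig n = (-1) ^ Suc (\<Sum>(AA n))"

lemma sig_sq: "sig n * sig n = 1"
  by (simp add: sig_def flip: power_add)

lemma neg1_sq: "((-1::complex) ^ k) * ((-1) ^ k) = 1"
  by (simp flip: power_add)

definition JE :: "nat \<Rightarrow> nat set \<Rightarrow> cvec" where
  "JE n X = E n X - sc (sig n) (\<Sum>x\<in>X. E n (insert x (AA n - X)))"

lemma jac_E:
  assumes X: "X \<in> Sets n n" and n: "n \<ge> 1"
  shows "JE n X \<in> SR n"
proof -
  have XA: "X \<subseteq> AA n" using X by (simp add: Sets_def)
  have fX: "finite X" using finite_subset[OF XA] by simp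
  define e where "e = ((-1::complex) ^ (\<Sum>X))"
  have coef: "e * (-1) ^ Suc x = sig n * (-1) ^ (\<Sum>(insert x (AA n - X)))" if "x \<in> X" for x
  proof -
    have xn: "x \<notin> AA n - X" using that by auto
    have s1: "\<Sum>(insert x (AA n - X)) = x + \<Sum>(AA n - X)" using xn by simp
    have s2: "\<Sum>X + \<Sum>(AA n - X) = \<Sum>(AA n)"
      using sum.subset_diff[OF XA finite_AA, of "\<lambda>x. x"] by simp
    have "(-1::complex) ^ (\<Sum>X + Suc x) = (-1) ^ (Suc (\<Sum>(AA n)) + \<Sum>(insert x (AA n - X)))"
    proof (rule neg1_pow_eq)
      have eq: "\<Sum>X + Suc x + (Suc (\<Sum>(AA n)) + \<Sum>(insert x (AA n - X))) = 2 * (\<Sum>(AA n) + x + 1)"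
        by (simp add: s1 s2[symmetric])
      show "even (\<Sum>X + Suc x + (Suc (\<Sum>(AA n)) + \<Sum>(insert x (AA n - X))))" by (subst eq) simp
    qed
    then show ?thesis unfolding e_def sig_def by (simp only: power_add)
  qed
  have J: "F n X - (\<Sum>x\<in>X. sc ((-1) ^ Suc x) (F n (insert x (AA n - X)))) \<in> SR n"
    by (rule jac_F[OF X n])
  have "sc e (F n X - (\<Sum>x\<in>X. sc ((-1) ^ Suc x) (F n (insert x (AA n - X))))) = JE n X"
  proof -
    have "sc e (\<Sum>x\<in>X. sc ((-1) ^ Suc x) (F n (insert x (AA n - X)))) =
          (\<Sum>x\<in>X. sc (e * (-1) ^ Suc x) (F n (insert x (AA n - X))))"
      by (simp add: fun_eq_iff sum_fun_apply sum_distrib_left mult.assoc)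
    also have "\<dots> = (\<Sum>x\<in>X. sc (sig n) (E n (insert x (AA n - X))))"
      by (rule sum.cong) (simp_all only: coef E_def sc_def mult.assoc)
    also have "\<dots> = sc (sig n) (\<Sum>x\<in>X. E n (insert x (AA n - X)))"
      by (simp add: fun_eq_iff sum_fun_apply sum_distrib_left)
    finally show ?thesis unfolding JE_def E_def e_def
      by (simp add: fun_eq_iff right_diff_distrib)
  qed
  then show ?thesis using M.span_scale[OF J, of e] by simp
qed

definition D :: "nat \<Rightarrow> nat set \<Rightarrow> cvec" where
  "D n T = (\<Sum>v\<in>T. E n (T - {v}))"

definition DU :: "nat \<Rightarrow> nat set \<Rightarrow> cvec" where
  "DU n W = (\<Sum>w\<in>AA n - W. D n (insert w W))"

lemma sc_diff: "sc c (a - b) = sc c a - sc c b"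
  by (simp add: fun_eq_iff sc_def algebra_simps)

lemma sum_const_sc: "finite A \<Longrightarrow> (\<Sum>x\<in>A. v) = sc (of_nat (card A)) v"
  by (induction A rule: finite_induct) (auto simp: fun_eq_iff sc_def algebra_simps)

lemma sc_sum: "sc c (\<Sum>i\<in>S. f i) = (\<Sum>i\<in>S. sc c (f i))"
  by (simp add: fun_eq_iff sum_fun_apply sum_distrib_left)

lemma Sets_card: "X \<in> Sets n k \<Longrightarrow> card X = k" by (simp add: Sets_def)
lemma Sets_sub: "X \<in> Sets n k \<Longrightarrow> X \<subseteq> AA n" by (simp add: Sets_def)
lemma Sets_fin: "X \<in> Sets n k \<Longrightarrow> finite X" using finite_subset[OF Sets_sub] by simp

lemma card_compl: "X \<in> Sets n n \<Longrightarrow> card (AA n - X) = n - 1"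
  using card_Diff_subset[OF Sets_fin Sets_sub, of X n n] by (simp add: card_AA Sets_card)

lemma du:
  assumes W: "W \<in> Sets n n" and n: "n \<ge> 1"
  shows "DU n W \<in> SR n"
proof -
  have WA: "W \<subseteq> AA n" and fW: "finite W" and cW: "card W = n"
    using W by (auto simp: Sets_sub Sets_fin Sets_card)
  have cC: "card (AA n - W) = n - 1" by (rule card_compl[OF W])
  define Q where "Q x = (\<Sum>z\<in>AA n - W. E n (insert z (W - {x})))" for x
  define Z where "Z x = insert x (AA n - W)" for x
  have ZS: "Z x \<in> Sets n n" if "x \<in> W" for x
  proof -
    have "x \<notin> AA n - W" using that by auto
    then have "card (Z x) = n" unfolding Z_def using cC n by (simp add: card_insert_if)
    then show ?thesis unfolding Z_def Sets_def using that WA by auto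
  qed
  have JEZ: "JE n (Z x) = E n (Z x) - sc (sig n) (E n W + Q x)" if "x \<in> W" for x
  proof -
    have c: "AA n - Z x = W - {x}" unfolding Z_def using that WA by auto
    have xn: "x \<notin> AA n - W" using that by auto
    have "(\<Sum>z\<in>Z x. E n (insert z (W - {x}))) = E n (insert x (W - {x})) + Q x"
      unfolding Z_def Q_def using xn by (simp add: sum.insert)
    moreover have "insert x (W - {x}) = W" using that by auto
    ultimately show ?thesis unfolding JE_def c by simp
  qed
  have DUe: "DU n W = sc (of_nat (n - 1)) (E n W) + (\<Sum>x\<in>W. Q x)"
  proof -
    have "D n (insert w W) = E n W + (\<Sum>v\<in>W. E n (insert w (W - {v})))" if "w \<in> AA n - W" for w
    proof -
      have wn: "w \<notin> W" using that by auto
      have "D n (insert w W) = E n (insert w W - {w}) + (\<Sum>v\<in>W. E n (insert w W - {v}))"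
        unfolding D_def using wn fW by (simp add: sum.insert)
      moreover have "insert w W - {w} = W" using wn by auto
      moreover have "(\<Sum>v\<in>W. E n (insert w W - {v})) = (\<Sum>v\<in>W. E n (insert w (W - {v})))"
        by (rule sum.cong) (use wn in \<open>auto simp: insert_Diff_if\<close>)
      ultimately show ?thesis by simp
    qed
    then have "DU n W = (\<Sum>w\<in>AA n - W. E n W + (\<Sum>v\<in>W. E n (insert w (W - {v}))))"
      unfolding DU_def by (rule sum.cong[OF refl])
    also have "\<dots> = (\<Sum>w\<in>AA n - W. E n W) + (\<Sum>w\<in>AA n - W. \<Sum>v\<in>W. E n (insert w (W - {v})))"
      by (rule sum.distrib)
    also have "(\<Sum>w\<in>AA n - W. \<Sum>v\<in>W. E n (insert w (W - {v}))) = (\<Sum>x\<in>W. Q x)"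
      unfolding Q_def by (rule sum.swap)
    finally have "DU n W = (\<Sum>w\<in>AA n - W. E n W) + (\<Sum>x\<in>W. Q x)" .
    moreover have fc: "finite (AA n - W)" by simp
    ultimately show ?thesis by (simp only: sum_const_sc[OF fc] cC)
  qed
  have main: "DU n W = - (JE n W + sc (sig n) (\<Sum>x\<in>W. JE n (Z x)))"
  proof -
    have "(\<Sum>x\<in>W. JE n (Z x)) = (\<Sum>x\<in>W. E n (Z x) - sc (sig n) (E n W + Q x))"
      by (rule sum.cong) (simp_all add: JEZ)
    also have "\<dots> = (\<Sum>x\<in>W. E n (Z x)) - sc (sig n) (sc (of_nat n) (E n W) + (\<Sum>x\<in>W. Q x))"
      by (simp only: sum_subtractf sc_sum[symmetric] sum.distrib sum_const_sc[OF fW] cW)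
    finally have e: "sc (sig n) (\<Sum>x\<in>W. JE n (Z x)) =
        sc (sig n) (\<Sum>x\<in>W. E n (Z x)) - (sc (of_nat n) (E n W) + (\<Sum>x\<in>W. Q x))"
      by (simp only: sc_diff sc_sc_one[OF sig_sq])
    have j: "JE n W = E n W - sc (sig n) (\<Sum>x\<in>W. E n (Z x))" unfolding JE_def Z_def by simp
    show ?thesis unfolding DUe e j using n by (simp add: fun_eq_iff sc_def algebra_simps of_nat_diff)
  qed
  have "JE n W + sc (sig n) (\<Sum>x\<in>W. JE n (Z x)) \<in> SR n"
    by (intro M.span_add M.span_scale M.span_sum jac_E[OF W n] jac_E[OF ZS n]) simp
  then show ?thesis unfolding main by (rule M.span_neg)
qed

definition alpha :: "nat \<Rightarrow> nat \<Rightarrow> complex" where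
  "alpha n t = (-1) ^ (n - t) / (of_nat (Suc n) * of_nat (n choose t))"

lemma one_plus_nat_nz: "(1::complex) + of_nat n \<noteq> 0"
proof -
  have "(of_nat (Suc n) :: complex) \<noteq> 0" by (rule of_nat_neq_0)
  then show ?thesis by simp
qed

lemma alpha_aux:
  fixes s m q c0 c1 N :: complex
  assumes "c0 \<noteq> 0" "c1 \<noteq> 0" "N \<noteq> 0" "s * c1 = m * c0"
  shows "s * (- q / (N * c0)) + m * (q / (N * c1)) = 0"
proof -
  have "s * (- q / (N * c0)) + m * (q / (N * c1)) = q * (m * c0 - s * c1) / (N * c0 * c1)"
    using assms by (simp add: field_simps)
  then show ?thesis using assms(4) by simp
qed

lemma alpha_rec:
  assumes "k < n"
  shows "of_nat (Suc k) * alpha n k + of_nat (n - k) * alpha n (Suc k) = 0"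
proof -
  have b: "Suc k * (n choose Suc k) = (n - k) * (n choose k)"
    using binomial_absorption[of k n] binomial_absorb_comp[of n k] by simp
  have nz1: "(n choose k) \<noteq> 0" "(n choose Suc k) \<noteq> 0" using assms by auto
  have p: "(-1::complex) ^ (n - k) = - ((-1) ^ (n - Suc k))"
    using assms by (simp add: Suc_diff_Suc[symmetric])
  have b': "of_nat (Suc k) * of_nat (n choose Suc k) = (of_nat (n - k) * of_nat (n choose k) :: complex)"
    using b by (metis of_nat_mult)
  have "of_nat (Suc k) * (- ((-1) ^ (n - Suc k)) / (of_nat (Suc n) * of_nat (n choose k))) +
        of_nat (n - k) * ((-1) ^ (n - Suc k) / (of_nat (Suc n) * of_nat (n choose Suc k))) = (0::complex)"
    by (rule alpha_aux) (use nz1 b' one_plus_nat_nz in simp_all)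
  then show ?thesis unfolding alpha_def p .
qed

lemma card_int_ge:
  assumes "T \<in> Sets n (Suc n)" "U \<in> Sets n (Suc n)"
  shows "card (T \<inter> U) \<ge> 1"
proof -
  have f: "finite T" "finite U" using assms Sets_fin by auto
  have "card (T \<union> U) \<le> card (AA n)"
    using assms by (intro card_mono) (auto simp: Sets_sub)
  then have "card (T \<union> U) \<le> 2 * n - 1" by (simp add: card_AA)
  moreover have "card (T \<union> U) + card (T \<inter> U) = card T + card U" using card_Un_Int[OF f] by simp
  ultimately show ?thesis using assms by (simp add: Sets_card)
qed

lemma coef_delta:
  assumes T: "T \<in> Sets n (Suc n)" and U: "U \<in> Sets n (Suc n)"
  shows "(\<Sum>w\<in>T. alpha n (card ((T - {w}) \<inter> U))) = (if T = U then 1 else 0)"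
proof -
  have fT: "finite T" using T Sets_fin by auto
  define t where "t = card (T \<inter> U)"
  have cTU: "card (T - U) = Suc n - t"
    using card_Diff_subset_Int[of T U] fT T unfolding t_def by (simp add: Sets_card Int_commute)
  have s1: "(\<Sum>w\<in>T \<inter> U. alpha n (card ((T - {w}) \<inter> U))) = of_nat t * alpha n (t - 1)"
  proof -
    have "(\<Sum>w\<in>T \<inter> U. alpha n (card ((T - {w}) \<inter> U))) = (\<Sum>w\<in>T \<inter> U. alpha n (t - 1))"
    proof (rule sum.cong)
      fix w assume w: "w \<in> T \<inter> U"
      have "(T - {w}) \<inter> U = (T \<inter> U) - {w}" by auto
      then show "alpha n (card ((T - {w}) \<inter> U)) = alpha n (t - 1)"
        using w fT unfolding t_def by simp
    qed simp
    then show ?thesis unfolding t_def by simp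
  qed
  have s2: "(\<Sum>w\<in>T - U. alpha n (card ((T - {w}) \<inter> U))) = of_nat (Suc n - t) * alpha n t"
  proof -
    have "(\<Sum>w\<in>T - U. alpha n (card ((T - {w}) \<inter> U))) = (\<Sum>w\<in>T - U. alpha n t)"
    proof (rule sum.cong)
      fix w assume w: "w \<in> T - U"
      have "(T - {w}) \<inter> U = T \<inter> U" using w by auto
      then show "alpha n (card ((T - {w}) \<inter> U)) = alpha n t" unfolding t_def by simp
    qed simp
    then show ?thesis using cTU by simp
  qed
  have split: "(\<Sum>w\<in>T. alpha n (card ((T - {w}) \<inter> U))) =
     (\<Sum>w\<in>T \<inter> U. alpha n (card ((T - {w}) \<inter> U))) + (\<Sum>w\<in>T - U. alpha n (card ((T - {w}) \<inter> U)))"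
    using sum.Int_Diff[OF fT] by blast
  show ?thesis
  proof (cases "T = U")
    case True
    have "(\<Sum>w\<in>T. alpha n (card ((T - {w}) \<inter> U))) = (\<Sum>w\<in>U. alpha n n)"
    proof (rule sum.cong)
      fix w assume "w \<in> U"
      then have "card ((U - {w}) \<inter> U) = n" using U Sets_fin[OF U] by (simp add: Sets_card Int_absorb2)
      then show "alpha n (card ((T - {w}) \<inter> U)) = alpha n n" using True by simp
    qed (use True in simp)
    also have "\<dots> = of_nat (Suc n) * alpha n n" using U by (simp add: Sets_card)
    also have "\<dots> = 1" unfolding alpha_def by (simp del: of_nat_Suc)
    finally show ?thesis using True by simp
  next
    case False
    have t1: "t \<ge> 1" unfolding t_def by (rule card_int_ge[OF T U])
    have tn: "t \<le> n"
    proof (rule ccontr)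
      assume "\<not> t \<le> n"
      moreover have "t \<le> Suc n" unfolding t_def using T U
        by (metis Sets_card Sets_fin card_mono inf_le2)
      ultimately have "t = Suc n" by simp
      then have "card (T \<inter> U) = card U" using U by (simp add: Sets_card t_def)
      then have "T \<inter> U = U" using Sets_fin[OF U] by (metis card_subset_eq inf_le2)
      then have "U \<subseteq> T" by auto
      then have "U = T" using Sets_fin[OF T] T U by (metis Sets_card card_subset_eq)
      then show False using False by simp
    qed
    obtain k where k: "t = Suc k" using t1 by (cases t) auto
    have "of_nat (Suc k) * alpha n k + of_nat (n - k) * alpha n (Suc k) = 0"
      by (rule alpha_rec) (use k tn in simp)
    then show ?thesis using False split s1 s2 k by simp
  qed
qed

lemma d_rel:
  assumes U: "U \<in> Sets n (Suc n)" and n: "n \<ge> 1"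
  shows "D n U \<in> SR n"
proof -
  define a where "a W = alpha n (card (W \<inter> U))" for W
  have r: "(\<Sum>W\<in>Sets n n. sc (a W) (DU n W)) \<in> SR n"
    by (intro M.span_sum M.span_scale du n) simp
  define h where "h = (\<lambda>(T, w). (T - {w}, (w::nat)))"
  have bij: "bij_betw h (SIGMA T:Sets n (Suc n). T) (SIGMA W:Sets n n. AA n - W)"
  proof (rule bij_betwI[where g = "\<lambda>(W, w). (insert w W, w)"])
    show "h \<in> (SIGMA T:Sets n (Suc n). T) \<rightarrow> (SIGMA W:Sets n n. AA n - W)"
    proof
      fix p assume "p \<in> (SIGMA T:Sets n (Suc n). T)"
      then obtain T w where p: "p = (T, w)" "T \<in> Sets n (Suc n)" "w \<in> T" by auto
      then have "T - {w} \<in> Sets n n" using Sets_fin[of T] by (auto simp: Sets_def)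
      then show "h p \<in> (SIGMA W:Sets n n. AA n - W)" using p by (auto simp: h_def Sets_def)
    qed
    show "(\<lambda>(W, w). (insert w W, w)) \<in> (SIGMA W:Sets n n. AA n - W) \<rightarrow> (SIGMA T:Sets n (Suc n). T)"
    proof
      fix p assume "p \<in> (SIGMA W:Sets n n. AA n - W)"
      then obtain W w where p: "p = (W, w)" "W \<in> Sets n n" "w \<in> AA n - W" by auto
      then have "insert w W \<in> Sets n (Suc n)" using Sets_fin[of W] by (auto simp: Sets_def)
      then show "(\<lambda>(W, w). (insert w W, w)) p \<in> (SIGMA T:Sets n (Suc n). T)" using p by auto
    qed
    show "\<And>p. p \<in> (SIGMA T:Sets n (Suc n). T) \<Longrightarrow> (\<lambda>(W, w). (insert w W, w)) (h p) = p"
      by (auto simp: h_def)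
    show "\<And>p. p \<in> (SIGMA W:Sets n n. AA n - W) \<Longrightarrow> h ((\<lambda>(W, w). (insert w W, w)) p) = p"
      by (auto simp: h_def)
  qed
  define g where "g = (\<lambda>(W, w). sc (a W) (D n (insert w W)))"
  have "(\<Sum>W\<in>Sets n n. sc (a W) (DU n W)) = (\<Sum>W\<in>Sets n n. \<Sum>w\<in>AA n - W. g (W, w))"
    unfolding DU_def g_def by (simp add: sc_sum)
  also have "\<dots> = sum g (SIGMA W:Sets n n. AA n - W)"
    using sum.Sigma[of "Sets n n" "\<lambda>W. AA n - W" "\<lambda>W w. g (W, w)"] by simp
  also have "\<dots> = sum (g \<circ> h) (SIGMA T:Sets n (Suc n). T)"
    using sum.reindex_bij_betw[OF bij, of g] by simp
  also have "\<dots> = (\<Sum>T\<in>Sets n (Suc n). \<Sum>w\<in>T. (g \<circ> h) (T, w))"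
    using sum.Sigma[of "Sets n (Suc n)" "\<lambda>T. T" "\<lambda>T w. (g \<circ> h) (T, w)"] by (simp add: Sets_fin)
  also have "\<dots> = (\<Sum>T\<in>Sets n (Suc n). (if T = U then D n T else 0))"
  proof (rule sum.cong[OF refl])
    fix T assume T: "T \<in> Sets n (Suc n)"
    have "(\<Sum>w\<in>T. (g \<circ> h) (T, w)) = (\<Sum>w\<in>T. sc (alpha n (card ((T - {w}) \<inter> U))) (D n T))"
    proof (rule sum.cong[OF refl])
      fix w assume "w \<in> T"
      then have "insert w (T - {w}) = T" by auto
      then show "(g \<circ> h) (T, w) = sc (alpha n (card ((T - {w}) \<inter> U))) (D n T)"
        by (simp add: g_def h_def a_def)
    qed
    also have "\<dots> = sc (\<Sum>w\<in>T. alpha n (card ((T - {w}) \<inter> U))) (D n T)"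
      by (simp add: fun_eq_iff sum_fun_apply sum_distrib_right sc_def)
    also have "\<dots> = (if T = U then D n T else 0)"
      unfolding coef_delta[OF T U] by (simp add: fun_eq_iff sc_def)
    finally show "(\<Sum>w\<in>T. (g \<circ> h) (T, w)) = (if T = U then D n T else 0)" .
  qed
  also have "\<dots> = D n U" using U by (simp add: sum.delta')
  finally show ?thesis using r by simp
qed

definition Sub :: "nat set \<Rightarrow> nat \<Rightarrow> nat set set" where
  "Sub V m = {W. W \<subseteq> V \<and> card W = m}"

lemma finite_Sub[simp]: "finite V \<Longrightarrow> finite (Sub V m)"
proof -
  assume f: "finite V"
  have "Sub V m \<subseteq> Pow V" unfolding Sub_def by auto
  then show ?thesis using f by (metis finite_Pow_iff finite_subset)
qed

lemma sum_pairs: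
  assumes fV: "finite V" and m: "m \<ge> 1"
  shows "(\<Sum>W\<in>Sub V m. \<Sum>u\<in>W. f (W - {u}) u) = (\<Sum>Z\<in>Sub V (m - 1). \<Sum>u\<in>V - Z. f Z u)"
proof -
  have finW: "\<And>W. W \<in> Sub V m \<Longrightarrow> finite W" unfolding Sub_def using fV finite_subset by blast
  define h where "h = (\<lambda>(W, u). (W - {u}, (u::nat)))"
  have bij: "bij_betw h (SIGMA W:Sub V m. W) (SIGMA Z:Sub V (m - 1). V - Z)"
  proof (rule bij_betwI[where g = "\<lambda>(Z, u). (insert u Z, u)"])
    show "h \<in> (SIGMA W:Sub V m. W) \<rightarrow> (SIGMA Z:Sub V (m - 1). V - Z)"
    proof
      fix p assume "p \<in> (SIGMA W:Sub V m. W)"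
      then obtain W u where p: "p = (W, u)" "W \<in> Sub V m" "u \<in> W" by auto
      then have "W - {u} \<in> Sub V (m - 1)" using finW[of W] by (auto simp: Sub_def)
      then show "h p \<in> (SIGMA Z:Sub V (m - 1). V - Z)" using p by (auto simp: h_def Sub_def)
    qed
    show "(\<lambda>(Z, u). (insert u Z, u)) \<in> (SIGMA Z:Sub V (m - 1). V - Z) \<rightarrow> (SIGMA W:Sub V m. W)"
    proof
      fix p assume "p \<in> (SIGMA Z:Sub V (m - 1). V - Z)"
      then obtain Z u where p: "p = (Z, u)" "Z \<in> Sub V (m - 1)" "u \<in> V - Z" by auto
      have fZ: "finite Z" using p fV finite_subset by (auto simp: Sub_def)
      then have "insert u Z \<in> Sub V m" using p m by (auto simp: Sub_def)
      then show "(\<lambda>(Z, u). (insert u Z, u)) p \<in> (SIGMA W:Sub V m. W)" using p by auto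
    qed
    show "\<And>p. p \<in> (SIGMA W:Sub V m. W) \<Longrightarrow> (\<lambda>(Z, u). (insert u Z, u)) (h p) = p"
      by (auto simp: h_def)
    show "\<And>p. p \<in> (SIGMA Z:Sub V (m - 1). V - Z) \<Longrightarrow> h ((\<lambda>(Z, u). (insert u Z, u)) p) = p"
      by (auto simp: h_def)
  qed
  define g where "g = (\<lambda>(Z, u). f Z u)"
  have "(\<Sum>W\<in>Sub V m. \<Sum>u\<in>W. f (W - {u}) u) = (\<Sum>W\<in>Sub V m. \<Sum>u\<in>W. (g \<circ> h) (W, u))"
    by (simp add: g_def h_def)
  also have "\<dots> = sum (g \<circ> h) (SIGMA W:Sub V m. W)"
    using sum.Sigma[of "Sub V m" "\<lambda>W. W" "\<lambda>W u. (g \<circ> h) (W, u)"] fV finW by simp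
  also have "\<dots> = sum g (SIGMA Z:Sub V (m - 1). V - Z)"
    using sum.reindex_bij_betw[OF bij, of g] by simp
  also have "\<dots> = (\<Sum>Z\<in>Sub V (m - 1). \<Sum>u\<in>V - Z. g (Z, u))"
    using sum.Sigma[of "Sub V (m - 1)" "\<lambda>Z. V - Z" "\<lambda>Z u. g (Z, u)"] fV by simp
  finally show ?thesis by (simp add: g_def)
qed

definition G :: "nat \<Rightarrow> nat set \<Rightarrow> nat set \<Rightarrow> cvec" where
  "G n C V = (\<Sum>Z\<in>Sub V (n - card C). E n (C \<union> Z))"

lemma g_rel:
  assumes "C \<subseteq> AA n" "V \<subseteq> AA n" "C \<inter> V = {}" "card V = Suc n" "n \<ge> 1"
  shows "G n C V \<in> SR n"
  using assms
proof (induction "card C" arbitrary: C rule: less_induct)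
  case less
  define k where "k = card C"
  have fC: "finite C" using less.prems finite_subset[of C "AA n"] by simp
  have fV: "finite V" using less.prems finite_subset[of V "AA n"] by simp
  have ck: "k + Suc n \<le> 2 * n - 1"
  proof -
    have "card (C \<union> V) \<le> card (AA n)" using less.prems by (intro card_mono) auto
    then show ?thesis using card_Un_disjoint[OF fC fV] less.prems unfolding k_def by (simp add: card_AA)
  qed
  then have kn: "k \<le> n" by simp
  have IH: "G n (C - {u}) V \<in> SR n" if "u \<in> C" for u
  proof -
    have "card (C - {u}) < card C" by (rule card_Diff1_less[OF fC that])
    then show ?thesis using less.hyps less.prems by auto
  qed
  define m where "m = Suc n - k"
  have m1: "m \<ge> 1" unfolding m_def using kn by simp
  have subW: "\<And>W. W \<in> Sub V m \<Longrightarrow> C \<union> W \<in> Sets n (Suc n)"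
  proof -
    fix W assume W: "W \<in> Sub V m"
    have fW: "finite W" using W fV finite_subset by (auto simp: Sub_def)
    have "C \<inter> W = {}" using W less.prems by (auto simp: Sub_def)
    then have "card (C \<union> W) = k + m" using card_Un_disjoint[OF fC fW] W unfolding k_def by (simp add: Sub_def)
    then show "C \<union> W \<in> Sets n (Suc n)" using W less.prems kn unfolding Sets_def m_def by (auto simp: Sub_def)
  qed
  have r: "(\<Sum>W\<in>Sub V m. D n (C \<union> W)) \<in> SR n"
    by (intro M.span_sum d_rel subW less.prems(5))
  have Dsplit: "D n (C \<union> W) = (\<Sum>u\<in>W. E n (C \<union> (W - {u}))) + (\<Sum>u\<in>C. E n ((C - {u}) \<union> W))"
    if W: "W \<in> Sub V m" for W
  proof -
    have fW: "finite W" using W fV finite_subset by (auto simp: Sub_def)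
    have dj: "W \<inter> C = {}" using W less.prems by (auto simp: Sub_def)
    have "D n (C \<union> W) = (\<Sum>u\<in>W \<union> C. E n (C \<union> W - {u}))" unfolding D_def by (simp add: Un_commute)
    also have "\<dots> = (\<Sum>u\<in>W. E n (C \<union> W - {u})) + (\<Sum>u\<in>C. E n (C \<union> W - {u}))"
      by (rule sum.union_disjoint[OF fW fC dj])
    also have "(\<Sum>u\<in>W. E n (C \<union> W - {u})) = (\<Sum>u\<in>W. E n (C \<union> (W - {u})))"
    proof (rule sum.cong[OF refl])
      fix u assume "u \<in> W"
      then have "C \<union> W - {u} = C \<union> (W - {u})" using dj by blast
      then show "E n (C \<union> W - {u}) = E n (C \<union> (W - {u}))" by simp
    qed
    also have "(\<Sum>u\<in>C. E n (C \<union> W - {u})) = (\<Sum>u\<in>C. E n ((C - {u}) \<union> W))"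
    proof (rule sum.cong[OF refl])
      fix u assume "u \<in> C"
      then have "C \<union> W - {u} = (C - {u}) \<union> W" using dj by blast
      then show "E n (C \<union> W - {u}) = E n ((C - {u}) \<union> W)" by simp
    qed
    finally show ?thesis .
  qed
  have P1: "(\<Sum>W\<in>Sub V m. \<Sum>u\<in>W. E n (C \<union> (W - {u}))) = sc (of_nat (Suc k)) (G n C V)"
  proof -
    have "(\<Sum>W\<in>Sub V m. \<Sum>u\<in>W. E n (C \<union> (W - {u}))) = (\<Sum>Z\<in>Sub V (m - 1). \<Sum>u\<in>V - Z. E n (C \<union> Z))"
      by (rule sum_pairs[OF fV m1, of "\<lambda>Z u. E n (C \<union> Z)"])
    also have "\<dots> = (\<Sum>Z\<in>Sub V (m - 1). sc (of_nat (Suc k)) (E n (C \<union> Z)))"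
    proof (rule sum.cong[OF refl])
      fix Z assume Z: "Z \<in> Sub V (m - 1)"
      have "card (V - Z) = Suc k" using Z fV less.prems kn unfolding m_def
        by (auto simp: Sub_def card_Diff_subset finite_subset)
      then show "(\<Sum>u\<in>V - Z. E n (C \<union> Z)) = sc (of_nat (Suc k)) (E n (C \<union> Z))"
        using sum_const_sc[of "V - Z" "E n (C \<union> Z)"] fV by simp
    qed
    also have "\<dots> = sc (of_nat (Suc k)) (G n C V)"
      unfolding G_def sc_sum m_def k_def using kn k_def by (simp add: Suc_diff_le)
    finally show ?thesis .
  qed
  have P2: "(\<Sum>W\<in>Sub V m. \<Sum>u\<in>C. E n ((C - {u}) \<union> W)) = (\<Sum>u\<in>C. G n (C - {u}) V)"
  proof -
    have "(\<Sum>W\<in>Sub V m. \<Sum>u\<in>C. E n ((C - {u}) \<union> W)) = (\<Sum>u\<in>C. \<Sum>W\<in>Sub V m. E n ((C - {u}) \<union> W))"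
      by (rule sum.swap)
    also have "\<dots> = (\<Sum>u\<in>C. G n (C - {u}) V)"
    proof (rule sum.cong[OF refl])
      fix u assume "u \<in> C"
      then have "n - card (C - {u}) = m" unfolding m_def k_def using fC kn k_def
        by (simp add: card_Diff_singleton) (metis Suc_diff_le card_gt_0_iff diff_Suc_Suc empty_iff less_eq_Suc_le Suc_pred)
      then show "(\<Sum>W\<in>Sub V m. E n ((C - {u}) \<union> W)) = G n (C - {u}) V" unfolding G_def by simp
    qed
    finally show ?thesis .
  qed
  have "(\<Sum>W\<in>Sub V m. D n (C \<union> W)) = sc (of_nat (Suc k)) (G n C V) + (\<Sum>u\<in>C. G n (C - {u}) V)"
    using Dsplit P1 P2 by (simp add: sum.distrib)
  then have "sc (of_nat (Suc k)) (G n C V) = (\<Sum>W\<in>Sub V m. D n (C \<union> W)) - (\<Sum>u\<in>C. G n (C - {u}) V)"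
    by (simp add: algebra_simps)
  moreover have "(\<Sum>W\<in>Sub V m. D n (C \<union> W)) - (\<Sum>u\<in>C. G n (C - {u}) V) \<in> SR n"
    by (intro M.span_diff r M.span_sum IH)
  ultimately have "sc (inverse (of_nat (Suc k))) (sc (of_nat (Suc k)) (G n C V)) \<in> SR n"
    by (metis M.span_scale)
  moreover have "sc (inverse (of_nat (Suc k))) (sc (of_nat (Suc k)) (G n C V)) = G n C V"
    by (simp add: fun_eq_iff sc_def of_nat_neq_0 del: of_nat_Suc)
  ultimately show ?case by simp
qed

lemma pow2_sum_lt: "(\<Sum>b<m. (2::nat) ^ b) < 2 ^ m"
  by (induction m) auto

lemma pow2_sum_sub_lt:
  assumes "finite S" "\<forall>b\<in>S. b < m"
  shows "(\<Sum>b\<in>S. (2::nat) ^ b) < 2 ^ m"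
proof -
  have "(\<Sum>b\<in>S. (2::nat) ^ b) \<le> (\<Sum>b<m. 2 ^ b)"
    by (rule sum_mono2) (use assms in auto)
  then show ?thesis using pow2_sum_lt[of m] by linarith
qed

definition key :: "nat set \<Rightarrow> nat" where "key X = (\<Sum>x\<in>X. 2 ^ x)"

definition SS :: "nat \<Rightarrow> cvec set" where "SS n = ind ` {c. standard_comb n c}"

abbreviation SP :: "nat \<Rightarrow> cvec set" where "SP n \<equiv> M.span (SS n \<union> relations n)"

lemma SR_SP: "v \<in> SR n \<Longrightarrow> v \<in> SP n"
  using M.span_mono[of "relations n" "SS n \<union> relations n"] by auto

lemma sl_nth_mono:
  assumes "finite X" "i \<le> k" "k < card X"
  shows "sl X ! i \<le> sl X ! k"
proof -
  have "sorted (sl X)" "length (sl X) = card X" using sl_props[OF assms(1)] by auto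
  then show ?thesis using assms by (simp add: sorted_nth_mono)
qed

lemma in_set_drop_ge:
  assumes "sorted l" "x \<in> set (drop j l)"
  shows "l ! j \<le> x"
proof -
  obtain i where i: "i < length (drop j l)" "x = drop j l ! i" using assms(2) by (auto simp: in_set_conv_nth)
  then show ?thesis using assms(1) by (simp add: sorted_nth_mono)
qed

lemma in_set_take_le:
  assumes "sorted l" "x \<in> set (take (Suc j) l)" "j < length l"
  shows "x \<le> l ! j"
proof -
  obtain i where i: "i < length (take (Suc j) l)" "take (Suc j) l ! i = x"
    using assms(2) by (metis in_set_conv_nth)
  then have "i \<le> j" "x = l ! i" by auto
  then show ?thesis using assms(1,3) by (simp add: sorted_nth_mono)
qed

lemma straighten:
  assumes X: "X \<in> Sets n n" and n: "n \<ge> 1"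
  shows "E n X \<in> SP n"
  using X
proof (induction "key X" arbitrary: X rule: less_induct)
  case less
  define xs where "xs = sl X"
  define ys where "ys = sl (AA n - X)"
  have XA: "X \<subseteq> AA n" and fX: "finite X" and cX: "card X = n"
    using less.prems by (auto simp: Sets_sub Sets_fin Sets_card)
  have v: "valid_comb n (xs, ys)" unfolding xs_def ys_def by (rule valid_sl[OF XA cX n])
  have pX: "set xs = X" "distinct xs" "length xs = n" "sorted xs"
    using sl_props[OF fX] cX unfolding xs_def by auto
  have pY: "set ys = AA n - X" "distinct ys" "length ys = n - 1" "sorted ys"
    using sl_props[of "AA n - X"] card_compl[OF less.prems] unfolding ys_def by auto
  have EF: "E n X = sc ((-1) ^ (\<Sum>X)) (ind (xs, ys))" unfolding E_def F_def xs_def ys_def by simp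
  show ?case
  proof (cases "\<forall>j < n - 1. xs ! j < ys ! j")
    case True
    have "standard_comb n (xs, ys)" unfolding standard_comb_def using v True
      by (simp add: xs_def ys_def sl_def)
    then have "ind (xs, ys) \<in> SP n" unfolding SS_def by (intro M.span_base) auto
    then show ?thesis unfolding EF by (rule M.span_scale)
  next
    case False
    then obtain j where j: "j < n - 1" "\<not> xs ! j < ys ! j" by blast
    have jlt: "ys ! j < xs ! j"
    proof -
      have "xs ! j \<in> X" using pX(1,3) j(1) nth_mem[of j xs] by simp
      moreover have "ys ! j \<in> AA n - X" using pY(1,3) j(1) nth_mem[of j ys] by simp
      ultimately have "xs ! j \<noteq> ys ! j" by (metis DiffD2)
      then show ?thesis using j by simp
    qed
    define C where "C = set (take j xs)"
    define Z0 where "Z0 = set (drop j xs)"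
    define B where "B = set (take (Suc j) ys)"
    define V where "V = Z0 \<union> B"
    have dxs: "distinct (take j xs @ drop j xs)" using pX by simp
    have CZ0: "C \<inter> Z0 = {}" unfolding C_def Z0_def using dxs by (simp only: distinct_append) 
    have XCZ: "X = C \<union> Z0" unfolding C_def Z0_def using pX(1) append_take_drop_id[of j xs] set_append[of "take j xs" "drop j xs"] by simp
    have BX: "B \<subseteq> AA n - X" unfolding B_def using pY set_take_subset[of "Suc j" ys] by simp
    have cC: "card C = j" unfolding C_def using pX j by (simp add: distinct_card)
    have cZ0: "card Z0 = n - j" unfolding Z0_def using pX j by (simp add: distinct_card)
    have cB: "card B = Suc j" unfolding B_def using pY j by (simp add: distinct_card)
    have fV: "finite V" unfolding V_def Z0_def B_def by simp
    have Z0B: "Z0 \<inter> B = {}" using BX XCZ by auto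
    have cV: "card V = Suc n" unfolding V_def using card_Un_disjoint[of Z0 B] Z0B cZ0 cB j
      unfolding Z0_def B_def by simp
    have CV: "C \<inter> V = {}" unfolding V_def using CZ0 BX XCZ by auto
    have CA: "C \<subseteq> AA n" and VA: "V \<subseteq> AA n" using XCZ XA BX unfolding V_def by auto
    have g: "G n C V \<in> SR n" by (rule g_rel[OF CA VA CV cV n])
    define S where "S = Sub V (n - j)"
    have Z0S: "Z0 \<in> S" unfolding S_def Sub_def V_def using cZ0 by auto
    have fS: "finite S" unfolding S_def using fV by simp
    have Gs: "G n C V = E n X + (\<Sum>Z\<in>S - {Z0}. E n (C \<union> Z))"
      unfolding G_def cC S_def[symmetric] using sum.remove[OF fS Z0S] XCZ by simp
    have others: "E n (C \<union> Z) \<in> SP n" if Z: "Z \<in> S - {Z0}" for Z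
    proof -
      have ZV: "Z \<subseteq> V" and cZ: "card Z = n - j" using Z unfolding S_def Sub_def by auto
      have fZ: "finite Z" using ZV fV finite_subset by blast
      have CZ: "C \<inter> Z = {}" using CV ZV by auto
      have mem: "C \<union> Z \<in> Sets n n" unfolding Sets_def using CA VA ZV card_Un_disjoint[OF _ fZ CZ] cC cZ j
        unfolding C_def by auto
      have keylt: "key (C \<union> Z) < key X"
      proof -
        have k1: "key (C \<union> Z) = key C + key Z" unfolding key_def C_def
          using sum.union_disjoint[OF _ fZ CZ[unfolded C_def]] by simp
        have k2: "key X = key C + key Z0" unfolding key_def XCZ C_def Z0_def
          using CZ0[unfolded C_def Z0_def] by (intro sum.union_disjoint) auto
        have fZ0: "finite Z0" unfolding Z0_def by simp
        have ne: "Z0 - Z \<noteq> {}"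
        proof
          assume "Z0 - Z = {}"
          then have "Z0 \<subseteq> Z" by auto
          then have "Z0 = Z" using card_subset_eq[OF fZ] cZ cZ0 by auto
          then show False using Z by auto
        qed
        have kZ: "key Z = key (Z \<inter> Z0) + key (Z \<inter> B)"
        proof -
          have e: "Z = (Z \<inter> Z0) \<union> (Z \<inter> B)" using ZV unfolding V_def by auto
          have d: "(Z \<inter> Z0) \<inter> (Z \<inter> B) = {}" using Z0B by blast
          have "key Z = key ((Z \<inter> Z0) \<union> (Z \<inter> B))" using e by simp
          also have "\<dots> = key (Z \<inter> Z0) + key (Z \<inter> B)" unfolding key_def
            using d fZ by (intro sum.union_disjoint) auto
          finally show ?thesis .
        qed
        have kZ0: "key Z0 = key (Z \<inter> Z0) + key (Z0 - Z)"
        proof -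
          have e: "Z0 = (Z \<inter> Z0) \<union> (Z0 - Z)" by auto
          have d: "(Z \<inter> Z0) \<inter> (Z0 - Z) = {}" by blast
          have "key Z0 = key ((Z \<inter> Z0) \<union> (Z0 - Z))" using e by simp
          also have "\<dots> = key (Z \<inter> Z0) + key (Z0 - Z)" unfolding key_def
            using d fZ0 by (intro sum.union_disjoint) auto
          finally show ?thesis .
        qed
        obtain z where z: "z \<in> Z0 - Z" using ne by auto
        have zge: "xs ! j \<le> z" using z pX unfolding Z0_def by (auto intro: in_set_drop_ge)
        have "(2::nat) ^ (xs ! j) \<le> 2 ^ z" using zge by simp
        also have "2 ^ z \<le> key (Z0 - Z)" unfolding key_def
          using member_le_sum[of z "Z0 - Z" "\<lambda>x. (2::nat) ^ x"] z fZ0 by simp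
        finally have big: "2 ^ (xs ! j) \<le> key (Z0 - Z)" .
        have small: "key (Z \<inter> B) < 2 ^ (xs ! j)" unfolding key_def
        proof (rule pow2_sum_sub_lt)
          show "finite (Z \<inter> B)" using fZ by simp
          show "\<forall>b\<in>Z \<inter> B. b < xs ! j"
          proof
            fix b assume "b \<in> Z \<inter> B"
            then have "b \<le> ys ! j" unfolding B_def using pY j
              by (intro in_set_take_le) auto
            then show "b < xs ! j" using jlt by simp
          qed
        qed
        show ?thesis using k1 k2 kZ kZ0 big small by linarith
      qed
      show ?thesis by (rule less.hyps[OF keylt mem])
    qed
    have "E n X = G n C V - (\<Sum>Z\<in>S - {Z0}. E n (C \<union> Z))" using Gs by simp
    moreover have "G n C V - (\<Sum>Z\<in>S - {Z0}. E n (C \<union> Z)) \<in> SP n"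
      by (intro M.span_diff SR_SP[OF g] M.span_sum others)
    ultimately show ?thesis by simp
  qed
qed

lemma F_E: "F n X = sc ((-1) ^ (\<Sum>X)) (E n X)"
  unfolding E_def by (simp add: sc_sc_one neg1_sq)

lemma std_valid: "standard_comb n c \<Longrightarrow> valid_comb n c"
  by (simp add: standard_comb_def)

lemma rel_in_span: "n \<ge> 1 \<Longrightarrow> relations n \<subseteq> M.span (combs_space n)"
proof
  fix r assume n: "n \<ge> 1" and r: "r \<in> relations n"
  have bb: "ind c \<in> M.span (combs_space n)" if "valid_comb n c" for c
    using that by (intro M.span_base) (auto simp: combs_space_def)
  from r consider
      (a) xs ys i j where "r = ind (swap_pos xs i j, ys) + ind (xs, ys)" "valid_comb n (xs, ys)" "i < j" "j < n"
    | (b) xs ys i j where "r = ind (xs, swap_pos ys i j) + ind (xs, ys)" "valid_comb n (xs, ys)" "i < j" "j < n - 1"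
    | (c) xs ys where "r = ind (xs, ys) - (\<Sum>i<n. sc ((-1) ^ (n - 1 - i)) (ind (ys @ [xs ! i], remove_nth i xs)))"
          "valid_comb n (xs, ys)"
    unfolding relations_def by blast
  then show "r \<in> M.span (combs_space n)"
  proof cases
    case a
    have "valid_comb n (swap_pos xs i j, ys)" using a by (intro valid_swap_fst) (auto simp: valid_comb_def)
    then show ?thesis using a bb by (auto intro: M.span_add)
  next
    case b
    have "valid_comb n (xs, swap_pos ys i j)" using b by (intro valid_swap_snd) (auto simp: valid_comb_def)
    then show ?thesis using b bb by (auto intro: M.span_add)
  next
    case c
    have "(\<Sum>i<n. sc ((-1) ^ (n - 1 - i)) (ind (ys @ [xs ! i], remove_nth i xs))) \<in> M.span (combs_space n)"
      by (intro M.span_sum M.span_scale bb jac_term_valid[OF c(2) _ n]) simp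
    then show ?thesis using c bb[OF c(2)] by (auto intro: M.span_diff)
  qed
qed

lemma partA:
  assumes n: "n \<ge> 1"
  shows "SP n = M.span (combs_space n)"
proof
  show "SP n \<subseteq> M.span (combs_space n)"
  proof (rule M.span_minimal)
    show "SS n \<union> relations n \<subseteq> M.span (combs_space n)"
    proof
      fix v assume "v \<in> SS n \<union> relations n"
      then show "v \<in> M.span (combs_space n)"
      proof
        assume "v \<in> SS n"
        then show ?thesis unfolding SS_def combs_space_def
          by (auto intro!: M.span_base simp: std_valid)
      next
        assume "v \<in> relations n"
        then show ?thesis using rel_in_span[OF n] by auto
      qed
    qed
  qed (rule M.subspace_span)
next
  show "M.span (combs_space n) \<subseteq> SP n"
  proof (rule M.span_minimal)
    show "combs_space n \<subseteq> SP n"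
    proof
      fix v assume "v \<in> combs_space n"
      then obtain xs ys where v: "v = ind (xs, ys)" and vc: "valid_comb n (xs, ys)"
        unfolding combs_space_def by auto
      have X: "set xs \<in> Sets n n" using vc unfolding Sets_def valid_comb_def AA_def
        by (auto simp: distinct_card)
      have a: "ind (xs, ys) - sc (sgnl xs * sgnl ys) (F n (set xs)) \<in> SP n"
        by (rule SR_SP[OF norm_comb[OF vc]])
      have b: "sc (sgnl xs * sgnl ys) (F n (set xs)) \<in> SP n"
        unfolding F_E by (intro M.span_scale straighten[OF X n])
      have "ind (xs, ys) = (ind (xs, ys) - sc (sgnl xs * sgnl ys) (F n (set xs))) + sc (sgnl xs * sgnl ys) (F n (set xs))"
        by simp
      then show "v \<in> SP n" unfolding v using M.span_add[OF a b] by metis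
    qed
  qed (rule M.subspace_span)
qed




lemma sum_AA: "\<Sum>(AA n) = n * (2 * n - 1)"
proof (cases n)
  case 0 then show ?thesis by (simp add: AA_def)
next
  case (Suc k)
  have "\<Sum>(AA n) = ((2*n-1) * (2*n-1+1) - 1 * (1 - 1)) div 2" unfolding AA_def by (rule Sum_Icc_nat)
  also have "\<dots> = ((2*k+1) * (2*k+2)) div 2" using Suc by simp
  also have "\<dots> = (2*k+1) * (k+1)" by (simp add: algebra_simps)
  finally show ?thesis using Suc by simp
qed

lemma sig_eq: "n \<ge> 1 \<Longrightarrow> sig n = (-1) ^ (n - 1)"
proof -
  assume n: "n \<ge> 1"
  have "(-1::complex) ^ Suc (\<Sum>(AA n)) = (-1) ^ (n - 1)"
  proof (rule neg1_pow_eq)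
    obtain k where k: "n = Suc k" using n by (cases n) auto
    have "Suc (\<Sum>(AA n)) + (n - 1) = 2 * (k * k + 2 * k + 1) - 0 + 0"
      unfolding sum_AA k by (simp add: algebra_simps)
    then show "even (Suc (\<Sum>(AA n)) + (n - 1))" by (metis add_0_right diff_zero even_mult_iff even_numeral)
  qed
  then show ?thesis by (simp add: sig_def)
qed

definition transv :: "nat \<Rightarrow> comb \<Rightarrow> nat set \<Rightarrow> bool" where
  "transv n T X \<longleftrightarrow> fst T ! (n - 1) \<in> X \<and> (\<forall>r < n - 1. (fst T ! r \<in> X) = (snd T ! r \<notin> X))"

definition eps :: "nat \<Rightarrow> comb \<Rightarrow> nat set \<Rightarrow> complex" where
  "eps n T X = (-1) ^ card {r. r < n - 1 \<and> snd T ! r \<in> X}"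

definition psi' :: "nat \<Rightarrow> comb \<Rightarrow> nat set \<Rightarrow> complex" where
  "psi' n T X = (if transv n T X then eps n T X else 0)"

locale stdT =
  fixes n :: nat and tx ty :: "nat list"
  assumes std: "standard_comb n (tx, ty)" and n1: "n \<ge> 1"
begin

lemma lens: "length tx = n" "length ty = n - 1"
  using std by (auto simp: standard_comb_def valid_comb_def)

lemma dist: "distinct (tx @ ty)"
  using std by (auto simp: standard_comb_def valid_comb_def)

lemma setAA: "set tx \<union> set ty = AA n"
  using std by (auto simp: standard_comb_def valid_comb_def AA_def)

lemma ltr: "r < n - 1 \<Longrightarrow> tx ! r < ty ! r"
  using std by (auto simp: standard_comb_def)

lemma tx_inj: "i < n \<Longrightarrow> j < n \<Longrightarrow> tx ! i = tx ! j \<Longrightarrow> i = j"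
  using dist lens by (simp add: nth_eq_iff_index_eq)

lemma ty_inj: "i < n - 1 \<Longrightarrow> j < n - 1 \<Longrightarrow> ty ! i = ty ! j \<Longrightarrow> i = j"
  using dist lens by (simp add: nth_eq_iff_index_eq)

lemma txty: "i < n \<Longrightarrow> j < n - 1 \<Longrightarrow> tx ! i \<noteq> ty ! j"
proof
  assume ij: "i < n" "j < n - 1" and e: "tx ! i = ty ! j"
  have "tx ! i \<in> set tx" "ty ! j \<in> set ty" using ij lens by auto
  then show False using dist e by auto
qed

abbreviation "t \<equiv> tx ! (n - 1)"

lemma t_tx: "r < n - 1 \<Longrightarrow> tx ! r \<noteq> t"
proof
  assume r: "r < n - 1" and e: "tx ! r = t"
  have "r = n - 1" by (rule tx_inj) (use r e n1 in auto)
  then show False using r by simp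
qed

lemma t_ty: "r < n - 1 \<Longrightarrow> ty ! r \<noteq> t"
  using txty[of "n - 1" r] n1 by auto

lemma tx_AA: "i < n \<Longrightarrow> tx ! i \<in> AA n" using setAA lens by (metis UnI1 nth_mem)
lemma ty_AA: "i < n - 1 \<Longrightarrow> ty ! i \<in> AA n" using setAA lens by (metis UnI2 nth_mem)

lemma rows: "a \<in> AA n \<Longrightarrow> a = t \<or> (\<exists>r < n - 1. a = tx ! r \<or> a = ty ! r)"
proof -
  assume "a \<in> AA n"
  then have "a \<in> set tx \<or> a \<in> set ty" using setAA by auto
  then show ?thesis
  proof
    assume "a \<in> set tx"
    then obtain i where i: "i < n" "a = tx ! i" using lens by (auto simp: in_set_conv_nth)
    show ?thesis
    proof (cases "i = n - 1")
      case True then show ?thesis using i by simp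
    next
      case False then have "i < n - 1" using i by simp
      then show ?thesis using i by blast
    qed
  next
    assume "a \<in> set ty"
    then obtain i where i: "i < n - 1" "a = ty ! i" using lens by (auto simp: in_set_conv_nth)
    then show ?thesis by auto
  qed
qed

lemma trans_iff: "transv n (tx, ty) X \<longleftrightarrow> t \<in> X \<and> (\<forall>r < n - 1. (tx ! r \<in> X) = (ty ! r \<notin> X))"
  by (simp add: transv_def)

lemma eps_flip:
  assumes "m < n - 1" "\<forall>r < n - 1. r \<noteq> m \<longrightarrow> (ty ! r \<in> Z1) = (ty ! r \<in> Z0)"
    "(ty ! m \<in> Z1) \<noteq> (ty ! m \<in> Z0)"
  shows "eps n (tx, ty) Z1 = - eps n (tx, ty) Z0"
proof -
  define R0 where "R0 = {r. r < n - 1 \<and> ty ! r \<in> Z0}"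
  define R1 where "R1 = {r. r < n - 1 \<and> ty ! r \<in> Z1}"
  have f: "finite R0" "finite R1" unfolding R0_def R1_def by auto
  have e: "eps n (tx, ty) Z0 = (-1) ^ card R0" "eps n (tx, ty) Z1 = (-1) ^ card R1"
    unfolding eps_def R0_def R1_def by simp_all
  show ?thesis
  proof (cases "ty ! m \<in> Z1")
    case True
    then have "R1 = insert m R0" "m \<notin> R0" using assms unfolding R0_def R1_def by auto
    then show ?thesis unfolding e using f by simp
  next
    case False
    then have "R0 = insert m R1" "m \<notin> R1" using assms unfolding R0_def R1_def by auto
    then show ?thesis unfolding e using f by simp
  qed
qed


lemma card_split_rows:
  "card {r. r < n - 1 \<and> ty ! r \<in> X} + card {r. r < n - 1 \<and> ty ! r \<notin> X} = n - 1"
proof -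
  have "{r. r < n - 1 \<and> ty ! r \<in> X} \<union> {r. r < n - 1 \<and> ty ! r \<notin> X} = {..<n - 1}" by auto
  moreover have "{r. r < n - 1 \<and> ty ! r \<in> X} \<inter> {r. r < n - 1 \<and> ty ! r \<notin> X} = {}" by auto
  ultimately show ?thesis using card_Un_disjoint[of "{r. r < n - 1 \<and> ty ! r \<in> X}" "{r. r < n - 1 \<and> ty ! r \<notin> X}"]
    by simp
qed

lemma psi_jac:
  assumes X: "X \<in> Sets n n"
  shows "psi' n (tx, ty) X = (-1) ^ (n - 1) * (\<Sum>x\<in>X. psi' n (tx, ty) (insert x (AA n - X)))"
proof -
  define Y where "Y = AA n - X"
  have XA: "X \<subseteq> AA n" and fX: "finite X" using X by (auto simp: Sets_sub Sets_fin)
  define P where "P x = psi' n (tx, ty) (insert x Y)" for x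
  have tA: "t \<in> AA n" using tx_AA n1 by simp
  have mem_txY: "tx ! r \<in> Y \<longleftrightarrow> tx ! r \<notin> X" if "r < n" for r using tx_AA[OF that] unfolding Y_def by auto
  have mem_tyY: "ty ! r \<in> Y \<longleftrightarrow> ty ! r \<notin> X" if "r < n - 1" for r using ty_AA[OF that] unfolding Y_def by auto
  show ?thesis
  proof (cases "transv n (tx, ty) X")
    case True
    then have tX: "t \<in> X" and tr: "\<forall>r < n - 1. (tx ! r \<in> X) = (ty ! r \<notin> X)" by (auto simp: trans_iff)
    have z: "P x = 0" if "x \<in> X - {t}" for x
    proof -
      have "t \<notin> insert x Y" using that tX unfolding Y_def by auto
      then show ?thesis unfolding P_def psi'_def trans_iff by auto
    qed
    have trt: "transv n (tx, ty) (insert t Y)"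
      unfolding trans_iff
    proof (intro conjI allI impI)
      show "t \<in> insert t Y" by simp
      fix r assume r: "r < n - 1"
      have rn: "r < n" using r by simp
      have "(tx ! r \<in> insert t Y) = (tx ! r \<notin> X)" using t_tx[OF r] mem_txY[OF rn] by simp
      moreover have "(ty ! r \<notin> insert t Y) = (ty ! r \<in> X)" using t_ty[OF r] mem_tyY[OF r] by simp
      moreover have "(tx ! r \<in> X) = (ty ! r \<notin> X)" using tr r by simp
      ultimately show "(tx ! r \<in> insert t Y) = (ty ! r \<notin> insert t Y)" by simp
    qed
    have cs: "{r. r < n - 1 \<and> ty ! r \<in> insert t Y} = {r. r < n - 1 \<and> ty ! r \<notin> X}"
      using t_ty mem_tyY by auto
    have sumP: "(\<Sum>x\<in>X. P x) = P t"
      using sum.remove[OF fX tX, of P] z by simp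
    have Pt: "P t = (-1) ^ card {r. r < n - 1 \<and> ty ! r \<notin> X}"
      unfolding P_def psi'_def eps_def using trt cs by simp
    have "(-1::complex) ^ card {r. r < n - 1 \<and> ty ! r \<in> X} =
          (-1) ^ (n - 1 + card {r. r < n - 1 \<and> ty ! r \<notin> X})"
    proof (rule neg1_pow_eq)
      have eq: "card {r. r < n - 1 \<and> ty ! r \<in> X} + (n - 1 + card {r. r < n - 1 \<and> ty ! r \<notin> X}) = 2 * (n - 1)"
        using card_split_rows[of X] by simp
      show "even (card {r. r < n - 1 \<and> ty ! r \<in> X} + (n - 1 + card {r. r < n - 1 \<and> ty ! r \<notin> X}))"
        by (subst eq) simp
    qed
    moreover have L: "psi' n (tx, ty) X = (-1) ^ card {r. r < n - 1 \<and> ty ! r \<in> X}"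
      using True by (simp add: psi'_def eps_def)
    moreover have R: "(\<Sum>x\<in>X. psi' n (tx, ty) (insert x (AA n - X))) = (-1) ^ card {r. r < n - 1 \<and> ty ! r \<notin> X}"
      using sumP Pt unfolding P_def Y_def by simp
    ultimately show ?thesis by (simp only: power_add)
  next
    case False
    have "(\<Sum>x\<in>X. P x) = 0"
    proof (cases "\<exists>x0\<in>X. transv n (tx, ty) (insert x0 Y)")
      case False2: False
      then show ?thesis unfolding P_def psi'_def by simp
    next
      case True
      then obtain x0 where x0X: "x0 \<in> X" and tr0: "transv n (tx, ty) (insert x0 Y)" by blast
      define Z0 where "Z0 = insert x0 Y"
      have tZ0: "t \<in> Z0" and tr0': "\<forall>r < n - 1. (tx ! r \<in> Z0) = (ty ! r \<notin> Z0)"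
        using tr0 unfolding Z0_def trans_iff by auto
      have x0t: "x0 \<noteq> t"
      proof
        assume e: "x0 = t"
        have "transv n (tx, ty) X"
          unfolding trans_iff
        proof (intro conjI allI impI)
          show "t \<in> X" using e x0X by simp
          fix r assume r: "r < n - 1"
          have rn: "r < n" using r by simp
          have "(tx ! r \<in> Z0) = (tx ! r \<notin> X)" unfolding Z0_def e using t_tx[OF r] mem_txY[OF rn] by simp
          moreover have "(ty ! r \<notin> Z0) = (ty ! r \<in> X)" unfolding Z0_def e using t_ty[OF r] mem_tyY[OF r] by simp
          moreover have "(tx ! r \<in> Z0) = (ty ! r \<notin> Z0)" using tr0' r by simp
          ultimately show "(tx ! r \<in> X) = (ty ! r \<notin> X)" by simp
        qed
        then show False using False by simp
      qed
      have x0A: "x0 \<in> AA n" using x0X XA by auto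
      obtain m where m: "m < n - 1" "x0 = tx ! m \<or> x0 = ty ! m" using rows[OF x0A] x0t by blast
      define p where "p = (if x0 = tx ! m then ty ! m else tx ! m)"
      have mn: "m < n" using m(1) by simp
      have neq: "tx ! m \<noteq> ty ! m" by (rule txty[OF mn m(1)])
      have pair: "(x0 = tx ! m \<and> p = ty ! m) \<or> (x0 = ty ! m \<and> p = tx ! m)"
        unfolding p_def using m(2) by auto
      have pm: "p = tx ! m \<or> p = ty ! m" using pair by metis
      have px0: "p \<noteq> x0" using pair neq by metis
      have row0: "(tx ! m \<in> Z0) = (ty ! m \<notin> Z0)" using tr0' m(1) by simp
      have x0Z0: "x0 \<in> Z0" unfolding Z0_def by simp
      have pZ0: "p \<notin> Z0" using pair row0 x0Z0 by metis
      have pX: "p \<in> X"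
      proof -
        have "p \<in> AA n" using pm tx_AA[OF mn] ty_AA[OF m(1)] by blast
        then show ?thesis using pZ0 unfolding Z0_def Y_def by blast
      qed
      define Z1 where "Z1 = insert p Y"
      have x0Y: "x0 \<notin> Y" "p \<notin> Y" using x0X pX unfolding Y_def by blast+
      have other_rows: "tx ! r \<noteq> x0 \<and> tx ! r \<noteq> p \<and> ty ! r \<noteq> x0 \<and> ty ! r \<noteq> p"
        if rm: "r \<noteq> m" and r: "r < n - 1" for r
      proof -
        have rn: "r < n" using r by simp
        have "tx ! r \<noteq> tx ! m" using tx_inj[OF rn mn] rm by blast
        moreover have "ty ! r \<noteq> ty ! m" using ty_inj[OF r m(1)] rm by blast
        moreover have "tx ! r \<noteq> ty ! m" by (rule txty[OF rn m(1)])
        moreover have "ty ! r \<noteq> tx ! m" using txty[OF mn r] by metis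
        ultimately show ?thesis using pair by metis
      qed
      have tr1: "transv n (tx, ty) Z1"
        unfolding trans_iff
      proof (intro conjI allI impI)
        show "t \<in> Z1" using tZ0 x0t unfolding Z0_def Z1_def by auto
        fix r assume r: "r < n - 1"
        show "(tx ! r \<in> Z1) = (ty ! r \<notin> Z1)"
        proof (cases "r = m")
          case True
          have "(tx ! m \<in> Z1) = (tx ! m = p)" "(ty ! m \<in> Z1) = (ty ! m = p)"
            unfolding Z1_def using pair x0Y by auto
          then show ?thesis using True pair neq by auto
        next
          case False
          have o: "tx ! r \<noteq> x0 \<and> tx ! r \<noteq> p \<and> ty ! r \<noteq> x0 \<and> ty ! r \<noteq> p"
            by (rule other_rows[OF False r])
          then have "(tx ! r \<in> Z1) = (tx ! r \<in> Z0)" "(ty ! r \<in> Z1) = (ty ! r \<in> Z0)"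
            unfolding Z0_def Z1_def by simp_all
          then show ?thesis using tr0' r by simp
        qed
      qed
      have e01: "eps n (tx, ty) Z1 = - eps n (tx, ty) Z0"
      proof (rule eps_flip[OF m(1)])
        show "\<forall>r < n - 1. r \<noteq> m \<longrightarrow> (ty ! r \<in> Z1) = (ty ! r \<in> Z0)"
        proof (intro allI impI)
          fix r assume "r < n - 1" "r \<noteq> m"
          then have "ty ! r \<noteq> x0 \<and> ty ! r \<noteq> p" using other_rows by blast
          then show "(ty ! r \<in> Z1) = (ty ! r \<in> Z0)" unfolding Z0_def Z1_def by simp
        qed
        have "(ty ! m \<in> Z1) = (ty ! m = p)" "(ty ! m \<in> Z0) = (ty ! m = x0)"
          unfolding Z0_def Z1_def using pair x0Y by auto
        then show "(ty ! m \<in> Z1) \<noteq> (ty ! m \<in> Z0)" using pair neq px0 by auto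
      qed
      have zero: "P x = 0" if "x \<in> X - {x0, p}" for x
      proof -
        have "tx ! m \<notin> insert x Y" "ty ! m \<notin> insert x Y"
          using that pair x0Y by auto
        then have "\<not> ((tx ! m \<in> insert x Y) = (ty ! m \<notin> insert x Y))" by simp
        then have "\<not> transv n (tx, ty) (insert x Y)" unfolding trans_iff using m(1) by blast
        then show ?thesis unfolding P_def psi'_def by simp
      qed
      have sub: "{x0, p} \<subseteq> X" using x0X pX by auto
      have "(\<Sum>x\<in>X. P x) = (\<Sum>x\<in>{x0, p}. P x) + (\<Sum>x\<in>X - {x0, p}. P x)"
        using sum.subset_diff[OF sub fX, of P] by (simp add: add.commute)
      also have "(\<Sum>x\<in>X - {x0, p}. P x) = 0" using zero by simp
      also have "(\<Sum>x\<in>{x0, p}. P x) = P x0 + P p" using px0 by simp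
      also have "P x0 + P p = eps n (tx, ty) Z0 + eps n (tx, ty) Z1"
        unfolding P_def psi'_def using tr0 tr1 unfolding Z0_def Z1_def by simp
      finally show ?thesis using e01 by simp
    qed
    then show ?thesis using False unfolding P_def Y_def psi'_def by simp
  qed
qed

end


lemma coef_lemma:
  assumes XA: "X \<subseteq> AA n" and x: "x \<in> X"
  shows "(-1::complex) ^ (\<Sum>X) * (-1) ^ Suc x = sig n * (-1) ^ (\<Sum>(insert x (AA n - X)))"
proof -
  have xn: "x \<notin> AA n - X" using x by auto
  have s1: "\<Sum>(insert x (AA n - X)) = x + \<Sum>(AA n - X)" using xn by simp
  have s2: "\<Sum>X + \<Sum>(AA n - X) = \<Sum>(AA n)"
    using sum.subset_diff[OF XA finite_AA, of "\<lambda>x. x"] by simp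
  have "(-1::complex) ^ (\<Sum>X + Suc x) = (-1) ^ (Suc (\<Sum>(AA n)) + \<Sum>(insert x (AA n - X)))"
  proof (rule neg1_pow_eq)
    have eq: "\<Sum>X + Suc x + (Suc (\<Sum>(AA n)) + \<Sum>(insert x (AA n - X))) = 2 * (\<Sum>(AA n) + x + 1)"
      by (simp add: s1 s2[symmetric])
    show "even (\<Sum>X + Suc x + (Suc (\<Sum>(AA n)) + \<Sum>(insert x (AA n - X))))" by (subst eq) simp
  qed
  then show ?thesis unfolding sig_def by (simp only: power_add)
qed

definition psi :: "nat \<Rightarrow> comb \<Rightarrow> nat set \<Rightarrow> complex" where
  "psi n T X = (-1) ^ (\<Sum>X) * psi' n T X"

lemma (in stdT) psi_jac2:
  assumes X: "X \<in> Sets n n"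
  shows "psi n (tx, ty) X = (\<Sum>x\<in>X. (-1) ^ Suc x * psi n (tx, ty) (insert x (AA n - X)))"
proof -
  have XA: "X \<subseteq> AA n" using X by (simp add: Sets_sub)
  define e where "e = ((-1::complex) ^ (\<Sum>X))"
  have ee: "e * e = 1" unfolding e_def by (rule neg1_sq)
  have "e * (\<Sum>x\<in>X. (-1) ^ Suc x * psi n (tx, ty) (insert x (AA n - X)))
      = (\<Sum>x\<in>X. sig n * psi' n (tx, ty) (insert x (AA n - X)))"
    unfolding sum_distrib_left
  proof (rule sum.cong[OF refl])
    fix x assume x: "x \<in> X"
    have "e * ((-1) ^ Suc x * psi n (tx, ty) (insert x (AA n - X))) =
          (e * (-1) ^ Suc x) * (-1) ^ (\<Sum>(insert x (AA n - X))) * psi' n (tx, ty) (insert x (AA n - X))"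
      unfolding psi_def by (simp add: mult.assoc)
    also have "\<dots> = sig n * ((-1) ^ (\<Sum>(insert x (AA n - X))) * (-1) ^ (\<Sum>(insert x (AA n - X)))) *
          psi' n (tx, ty) (insert x (AA n - X))"
      unfolding e_def coef_lemma[OF XA x] by (simp add: mult.assoc)
    also have "\<dots> = sig n * psi' n (tx, ty) (insert x (AA n - X))" by (simp add: neg1_sq)
    finally show "e * ((-1) ^ Suc x * psi n (tx, ty) (insert x (AA n - X))) = sig n * psi' n (tx, ty) (insert x (AA n - X))" .
  qed
  also have "\<dots> = sig n * (\<Sum>x\<in>X. psi' n (tx, ty) (insert x (AA n - X)))" by (simp add: sum_distrib_left)
  also have "\<dots> = psi' n (tx, ty) X" using psi_jac[OF X] sig_eq[OF n1] by simp
  finally have "e * (\<Sum>x\<in>X. (-1) ^ Suc x * psi n (tx, ty) (insert x (AA n - X))) = psi' n (tx, ty) X" .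
  then have "e * (e * (\<Sum>x\<in>X. (-1) ^ Suc x * psi n (tx, ty) (insert x (AA n - X)))) = e * psi' n (tx, ty) X"
    by simp
  then show ?thesis using ee unfolding psi_def e_def[symmetric] by (simp add: mult.assoc[symmetric])
qed

definition phi :: "nat \<Rightarrow> comb \<Rightarrow> comb \<Rightarrow> complex" where
  "phi n T c = sgnl (fst c) * sgnl (snd c) * psi n T (set (fst c))"

definition Phi :: "(comb \<Rightarrow> complex) \<Rightarrow> nat \<Rightarrow> cvec \<Rightarrow> complex" where
  "Phi f n v = (\<Sum>c\<in>{c. valid_comb n c}. v c * f c)"

lemma finite_valid: "finite {c. valid_comb n c}"
proof -
  have "{c. valid_comb n c} \<subseteq> {xs. set xs \<subseteq> AA n \<and> length xs = n} \<times> {ys. set ys \<subseteq> AA n \<and> length ys = n - 1}"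
    unfolding valid_comb_def AA_def by auto
  moreover have "finite ({xs. set xs \<subseteq> AA n \<and> length xs = n} \<times> {ys. set ys \<subseteq> AA n \<and> length ys = n - 1})"
    by (intro finite_cartesian_product finite_lists_length_eq) simp_all
  ultimately show ?thesis by (rule finite_subset)
qed

lemma Phi_add: "Phi f n (v + w) = Phi f n v + Phi f n w"
  unfolding Phi_def by (simp add: algebra_simps sum.distrib)

lemma Phi_sc: "Phi f n (sc a v) = a * Phi f n v"
  unfolding Phi_def by (simp add: sum_distrib_left mult.assoc)

lemma Phi_diff: "Phi f n (v - w) = Phi f n v - Phi f n w"
  unfolding Phi_def by (simp add: algebra_simps sum_subtractf)

lemma Phi_sum: "Phi f n (\<Sum>i\<in>S. g i) = (\<Sum>i\<in>S. Phi f n (g i))"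
  unfolding Phi_def by (simp add: sum_fun_apply sum_distrib_right sum.swap[of _ S])

lemma Phi_ind: "valid_comb n c \<Longrightarrow> Phi f n (ind c) = f c"
proof -
  assume v: "valid_comb n c"
  have "Phi f n (ind c) = (\<Sum>d\<in>{c. valid_comb n c}. (if d = c then f c else 0))"
    unfolding Phi_def ind_def by (rule sum.cong) auto
  also have "\<dots> = f c" using v finite_valid by (simp add: sum.delta')
  finally show ?thesis .
qed

lemma Phi_span:
  assumes "\<And>r. r \<in> relations n \<Longrightarrow> Phi f n r = 0" "v \<in> SR n"
  shows "Phi f n v = 0"
proof -
  have "subspace_like": "M.subspace {v. Phi f n v = 0}"
  proof (rule M.subspaceI)
    show "0 \<in> {v. Phi f n v = 0}" by (simp add: Phi_def)
    show "x + y \<in> {v. Phi f n v = 0}" if "x \<in> {v. Phi f n v = 0}" "y \<in> {v. Phi f n v = 0}" for x y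
      using that by (simp add: Phi_add)
    show "sc c x \<in> {v. Phi f n v = 0}" if "x \<in> {v. Phi f n v = 0}" for c x
      using that by (simp add: Phi_sc)
  qed
  show ?thesis using M.span_induct[of v "relations n" "\<lambda>v. Phi f n v = 0"] assms subspace_like by auto
qed


lemma valid_Sets: "valid_comb n (xs, ys) \<Longrightarrow> set xs \<in> Sets n n"
  unfolding Sets_def valid_comb_def AA_def by (auto simp: distinct_card)

lemma (in stdT) phi_rel:
  assumes r: "r \<in> relations n"
  shows "Phi (phi n (tx, ty)) n r = 0"
proof -
  let ?f = "phi n (tx, ty)"
  from r consider
      (a) xs ys i j where "r = ind (swap_pos xs i j, ys) + ind (xs, ys)" "valid_comb n (xs, ys)" "i < j" "j < n"
    | (b) xs ys i j where "r = ind (xs, swap_pos ys i j) + ind (xs, ys)" "valid_comb n (xs, ys)" "i < j" "j < n - 1"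
    | (c) xs ys where "r = ind (xs, ys) - (\<Sum>i<n. sc ((-1) ^ (n - 1 - i)) (ind (ys @ [xs ! i], remove_nth i xs)))"
          "valid_comb n (xs, ys)"
    unfolding relations_def by blast
  then show ?thesis
  proof cases
    case a
    have len: "length xs = n" and d: "distinct xs" using a(2) by (auto simp: valid_comb_def)
    have v': "valid_comb n (swap_pos xs i j, ys)" using a len by (intro valid_swap_fst) auto
    have "sgnl (swap_pos xs i j) = - sgnl xs" using a len d by (intro sgnl_swap) auto
    moreover have "set (swap_pos xs i j) = set xs" using a len by (intro set_swap_pos) auto
    ultimately show ?thesis unfolding a(1) Phi_add Phi_ind[OF v'] Phi_ind[OF a(2)] phi_def by simp
  next
    case b
    have len: "length ys = n - 1" and d: "distinct ys" using b(2) by (auto simp: valid_comb_def)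
    have v': "valid_comb n (xs, swap_pos ys i j)" using b len by (intro valid_swap_snd) auto
    have "sgnl (swap_pos ys i j) = - sgnl ys" using b len d by (intro sgnl_swap) auto
    then show ?thesis unfolding b(1) Phi_add Phi_ind[OF v'] Phi_ind[OF b(2)] phi_def by simp
  next
    case c
    have v: "valid_comb n (xs, ys)" by (rule c(2))
    have len: "length xs = n" and d: "distinct xs" using v by (auto simp: valid_comb_def)
    define S where "S = sgnl xs * sgnl ys"
    have X: "set xs \<in> Sets n n" by (rule valid_Sets[OF v])
    have t: "(-1) ^ (n - 1 - i) * ?f (ys @ [xs ! i], remove_nth i xs) =
             S * ((-1) ^ Suc (xs ! i) * psi n (tx, ty) (insert (xs ! i) (AA n - set xs)))" if i: "i < n" for i
    proof -
      have "set (ys @ [xs ! i]) = insert (xs ! i) (AA n - set xs)" using valid_set_snd[OF v] by simp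
      then have "?f (ys @ [xs ! i], remove_nth i xs) =
          sgnl (ys @ [xs ! i]) * sgnl (remove_nth i xs) * psi n (tx, ty) (insert (xs ! i) (AA n - set xs))"
        unfolding phi_def by simp
      then show ?thesis using jac_sign[OF v i n1] unfolding S_def
        by (simp add: mult.assoc[symmetric])
    qed
    have "Phi ?f n r = ?f (xs, ys) - (\<Sum>i<n. (-1) ^ (n - 1 - i) * ?f (ys @ [xs ! i], remove_nth i xs))"
      unfolding c(1) Phi_diff Phi_sum Phi_sc Phi_ind[OF v]
      using Phi_ind[OF jac_term_valid[OF v _ n1]] by simp
    also have "(\<Sum>i<n. (-1) ^ (n - 1 - i) * ?f (ys @ [xs ! i], remove_nth i xs)) =
        S * (\<Sum>i<n. (-1) ^ Suc (xs ! i) * psi n (tx, ty) (insert (xs ! i) (AA n - set xs)))"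
      unfolding sum_distrib_left
    proof (rule sum.cong[OF refl])
      fix i assume "i \<in> {..<n}"
      then have i: "i < n" by simp
      show "(-1) ^ (n - 1 - i) * ?f (ys @ [xs ! i], remove_nth i xs) =
             S * ((-1) ^ Suc (xs ! i) * psi n (tx, ty) (insert (xs ! i) (AA n - set xs)))" by (rule t[OF i])
    qed
    also have "(\<Sum>i<n. (-1) ^ Suc (xs ! i) * psi n (tx, ty) (insert (xs ! i) (AA n - set xs))) =
        (\<Sum>x\<in>set xs. (-1) ^ Suc x * psi n (tx, ty) (insert x (AA n - set xs)))"
      using sum_nth_distinct[OF d, of "\<lambda>x. (-1) ^ Suc x * psi n (tx, ty) (insert x (AA n - set xs))"] len
      by simp
    also have "\<dots> = psi n (tx, ty) (set xs)" using psi_jac2[OF X] by simp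
    finally show ?thesis unfolding phi_def S_def by simp
  qed
qed


lemma (in stdT) trans_key:
  assumes X: "X \<in> Sets n n" and tr: "transv n (tx, ty) X" and ne: "X \<noteq> set tx"
  shows "key (set tx) < key X"
proof -
  have XA: "X \<subseteq> AA n" and fX: "finite X" and cX: "card X = n" using X by (auto simp: Sets_sub Sets_fin Sets_card)
  have tX: "t \<in> X" and trr: "\<And>r. r < n - 1 \<Longrightarrow> (tx ! r \<in> X) = (ty ! r \<notin> X)"
    using tr by (auto simp: trans_iff)
  define R where "R = {r. r < n - 1 \<and> ty ! r \<in> X}"
  have fR: "finite R" unfolding R_def by simp
  have e1: "X - set tx = (\<lambda>r. ty ! r) ` R"
  proof
    show "X - set tx \<subseteq> (\<lambda>r. ty ! r) ` R"
    proof
      fix x assume x: "x \<in> X - set tx"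
      then have "x \<in> set ty" using XA setAA by auto
      then obtain r where r: "r < n - 1" "x = ty ! r" using lens by (auto simp: in_set_conv_nth)
      then show "x \<in> (\<lambda>r. ty ! r) ` R" using x unfolding R_def by auto
    qed
    show "(\<lambda>r. ty ! r) ` R \<subseteq> X - set tx"
    proof
      fix x assume "x \<in> (\<lambda>r. ty ! r) ` R"
      then obtain r where r: "r < n - 1" "ty ! r \<in> X" "x = ty ! r" unfolding R_def by auto
      have "ty ! r \<notin> set tx"
      proof
        assume "ty ! r \<in> set tx"
        then obtain i where "i < n" "ty ! r = tx ! i" using lens by (auto simp: in_set_conv_nth)
        then show False using txty[of i r] r by simp
      qed
      then show "x \<in> X - set tx" using r by simp
    qed
  qed
  have e2: "set tx - X = (\<lambda>r. tx ! r) ` R"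
  proof
    show "set tx - X \<subseteq> (\<lambda>r. tx ! r) ` R"
    proof
      fix x assume x: "x \<in> set tx - X"
      then obtain i where i: "i < n" "x = tx ! i" using lens by (auto simp: in_set_conv_nth)
      have "i \<noteq> n - 1" using i x tX by auto
      then have i': "i < n - 1" using i by simp
      then have "ty ! i \<in> X" using trr[OF i'] x i by auto
      then show "x \<in> (\<lambda>r. tx ! r) ` R" using i i' unfolding R_def by auto
    qed
    show "(\<lambda>r. tx ! r) ` R \<subseteq> set tx - X"
    proof
      fix x assume "x \<in> (\<lambda>r. tx ! r) ` R"
      then obtain r where r: "r < n - 1" "ty ! r \<in> X" "x = tx ! r" unfolding R_def by auto
      then have "tx ! r \<notin> X" using trr[OF r(1)] by simp
      then show "x \<in> set tx - X" using r lens by auto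
    qed
  qed
  have injty: "inj_on (\<lambda>r. ty ! r) R" by (rule inj_onI) (auto simp: R_def intro: ty_inj)
  have injtx: "inj_on (\<lambda>r. tx ! r) R" by (rule inj_onI) (auto simp: R_def intro: tx_inj)
  have Rne: "R \<noteq> {}"
  proof
    assume "R = {}"
    then have "X - set tx = {}" using e1 by simp
    then have "X \<subseteq> set tx" by auto
    moreover have "card (set tx) = n" using dist lens by (simp add: distinct_card)
    ultimately have "X = set tx" using cX card_subset_eq[of "set tx" X] by auto
    then show False using ne by simp
  qed
  have lt: "(\<Sum>r\<in>R. (2::nat) ^ (tx ! r)) < (\<Sum>r\<in>R. 2 ^ (ty ! r))"
    by (rule sum_strict_mono[OF fR Rne]) (simp add: R_def ltr)
  have k1: "key X = key (X \<inter> set tx) + key (X - set tx)"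
    unfolding key_def using fX by (metis sum.Int_Diff)
  have k2: "key (set tx) = key (X \<inter> set tx) + key (set tx - X)"
    unfolding key_def by (metis Int_commute finite_set sum.Int_Diff)
  have k3: "key (X - set tx) = (\<Sum>r\<in>R. 2 ^ (ty ! r))"
    unfolding e1 key_def using sum.reindex[OF injty, of "\<lambda>x. 2 ^ x"] by simp
  have k4: "key (set tx - X) = (\<Sum>r\<in>R. 2 ^ (tx ! r))"
    unfolding e2 key_def using sum.reindex[OF injtx, of "\<lambda>x. 2 ^ x"] by simp
  show ?thesis using k1 k2 k3 k4 lt by linarith
qed

lemma (in stdT) trans_self: "transv n (tx, ty) (set tx)"
  unfolding trans_iff
proof (intro conjI allI impI)
  show "t \<in> set tx" using lens n1 by simp
  fix r assume r: "r < n - 1"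
  have "tx ! r \<in> set tx" using r lens by simp
  moreover have "ty ! r \<notin> set tx"
  proof
    assume "ty ! r \<in> set tx"
    then obtain i where "i < n" "ty ! r = tx ! i" using lens by (auto simp: in_set_conv_nth)
    then show False using txty[of i r] r by simp
  qed
  ultimately show "(tx ! r \<in> set tx) = (ty ! r \<notin> set tx)" by simp
qed

lemma (in stdT) psi_self: "psi n (tx, ty) (set tx) \<noteq> 0"
  unfolding psi_def psi'_def eps_def using trans_self by simp

lemma (in stdT) phi_self: "phi n (tx, ty) (tx, ty) \<noteq> 0"
proof -
  have "sorted tx" "sorted ty" using std by (auto simp: standard_comb_def strict_sorted_iff)
  then have "sgnl tx = 1" "sgnl ty = 1" by (simp_all add: sgnl_def sorted_inv_zero)
  then show ?thesis unfolding phi_def using psi_self by simp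
qed

lemma std_determined:
  assumes "standard_comb n c" "standard_comb n d" "set (fst c) = set (fst d)"
  shows "c = d"
proof -
  have eq: "fst e = sl (set (fst e)) \<and> snd e = sl (AA n - set (fst e))" if "standard_comb n e" for e
  proof -
    have v: "valid_comb n e" using that by (simp add: standard_comb_def)
    have s: "sorted_wrt (<) (fst e)" "sorted_wrt (<) (snd e)" using that by (auto simp: standard_comb_def)
    have "fst e = sort (fst e)" "snd e = sort (snd e)" using s by (simp_all add: strict_sorted_iff sorted_sort_id)
    moreover have "sort (fst e) = sl (set (fst e))" "sort (snd e) = sl (set (snd e))"
      using s by (simp_all add: strict_sorted_iff sort_distinct_sl)
    moreover have "set (snd e) = AA n - set (fst e)" using valid_set_snd[of n "fst e" "snd e"] v by simp
    ultimately show ?thesis by simp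
  qed
  show ?thesis using eq[OF assms(1)] eq[OF assms(2)] assms(3) by (metis prod.collapse)
qed

lemma partB:
  assumes n: "n \<ge> 1" and mem: "(\<Sum>c\<in>{c. standard_comb n c}. sc (a c) (ind c)) \<in> SR n"
  shows "\<forall>c. standard_comb n c \<longrightarrow> a c = 0"
proof (rule ccontr)
  assume "\<not> (\<forall>c. standard_comb n c \<longrightarrow> a c = 0)"
  define A where "A = {c. standard_comb n c \<and> a c \<noteq> 0}"
  have Ane: "A \<noteq> {}" using \<open>\<not> _\<close> unfolding A_def by auto
  have fstd: "finite {c. standard_comb n c}"
    by (rule finite_subset[OF _ finite_valid[of n]]) (auto simp: standard_comb_def)
  have fA: "finite A" unfolding A_def by (rule finite_subset[OF _ fstd]) auto
  define f where "f (c::comb) = key (set (fst c))" for c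
  define m where "m = Max (f ` A)"
  have "m \<in> f ` A" unfolding m_def using fA Ane by simp
  then obtain T where TA: "T \<in> A" and fT: "f T = m" by auto
  have maxT: "f c \<le> f T" if "c \<in> A" for c using that fT fA unfolding m_def by simp
  obtain tx ty where T: "T = (tx, ty)" by (cases T)
  have stdT: "stdT n tx ty" using TA n unfolding A_def T stdT_def by simp
  have "Phi (phi n T) n (\<Sum>c\<in>{c. standard_comb n c}. sc (a c) (ind c)) = 0"
    unfolding T by (rule Phi_span[OF stdT.phi_rel[OF stdT] mem])
  moreover have "Phi (phi n T) n (\<Sum>c\<in>{c. standard_comb n c}. sc (a c) (ind c)) =
                 (\<Sum>c\<in>{c. standard_comb n c}. a c * phi n T c)"
    unfolding Phi_sum Phi_sc by (rule sum.cong) (auto simp: Phi_ind std_valid)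
  moreover have "(\<Sum>c\<in>{c. standard_comb n c}. a c * phi n T c) = a T * phi n T T"
  proof -
    have TS: "T \<in> {c. standard_comb n c}" using TA unfolding A_def by simp
    have z: "a c * phi n T c = 0" if c: "c \<in> {c. standard_comb n c} - {T}" for c
    proof (cases "a c = 0")
      case False
      then have cA: "c \<in> A" using c unfolding A_def by simp
      show ?thesis
      proof (rule ccontr)
        assume "a c * phi n T c \<noteq> 0"
        then have "psi n T (set (fst c)) \<noteq> 0" unfolding phi_def by auto
        then have tr: "transv n (tx, ty) (set (fst c))" unfolding T psi_def psi'_def by (auto split: if_splits)
        obtain xs ys where cxy: "c = (xs, ys)" by (cases c)
        have X: "set (fst c) \<in> Sets n n" using c std_valid[of n c] valid_Sets[of n xs ys] cxy by simp
        have neq: "set (fst c) \<noteq> set tx"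
        proof
          assume "set (fst c) = set tx"
          then have "c = T" using std_determined[of n c T] c TA unfolding A_def T by simp
          then show False using c by simp
        qed
        have "key (set tx) < key (set (fst c))" by (rule stdT.trans_key[OF stdT X tr neq])
        then show False using maxT[OF cA] unfolding f_def T by simp
      qed
    qed simp
    show ?thesis using sum.remove[OF fstd TS, of "\<lambda>c. a c * phi n T c"] z by simp
  qed
  ultimately have "a T * phi n T T = 0" by simp
  moreover have "phi n T T \<noteq> 0" unfolding T by (rule stdT.phi_self[OF stdT])
  moreover have "a T \<noteq> 0" using TA unfolding A_def by simp
  ultimately show False by simp
qed




lemma ind_inj: "inj ind"
  by (rule injI) (metis ind_def zero_neq_one)

lemma finite_combs: "finite (combs_space n)"
  unfolding combs_space_def using finite_valid by simp

lemma std_not_in_SR: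
  assumes n: "n \<ge> 1" and d: "standard_comb n d"
  shows "ind d \<notin> SR n"
proof
  assume "ind d \<in> SR n"
  define a where "a c = (if c = d then (1::complex) else 0)" for c
  have fstd: "finite {c. standard_comb n c}"
    by (rule finite_subset[OF _ finite_valid[of n]]) (auto simp: standard_comb_def)
  have "(\<Sum>c\<in>{c. standard_comb n c}. sc (a c) (ind c)) = (\<Sum>c\<in>{c. standard_comb n c}. if c = d then ind d else 0)"
    by (rule sum.cong) (auto simp: a_def sc_def fun_eq_iff)
  also have "\<dots> = ind d" using fstd d by (simp add: sum.delta')
  finally have "(\<Sum>c\<in>{c. standard_comb n c}. sc (a c) (ind c)) \<in> SR n" using \<open>ind d \<in> SR n\<close> by simp
  then have "a d = 0" using partB[OF n] d by blast
  then show False by (simp add: a_def)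
qed

lemma partC_dim:
  assumes n: "n \<ge> 1"
  shows "rho_dim n = card {c. standard_comb n c}"
proof -
  obtain B where BR: "B \<subseteq> relations n" and indB: "M.independent B" and RB: "relations n \<subseteq> M.span B"
    and cB: "card B = M.dim (relations n)"
    using M.basis_exists by blast
  have Bsp: "B \<subseteq> M.span (combs_space n)" using BR rel_in_span[OF n] by auto
  have fB: "finite B" using M.independent_span_bound[OF finite_combs indB Bsp] by simp
  define St where "St = SS n"
  have fstd: "finite {c. standard_comb n c}"
    by (rule finite_subset[OF _ finite_valid[of n]]) (auto simp: standard_comb_def)
  have fSt: "finite St" unfolding St_def SS_def using fstd by simp
  have cSt: "card St = card {c. standard_comb n c}"
    unfolding St_def SS_def by (rule card_image) (rule inj_on_subset[OF ind_inj], simp)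
  have disj: "B \<inter> St = {}"
  proof -
    have "v \<notin> St" if "v \<in> B" for v
    proof
      assume "v \<in> St"
      then obtain d where d: "standard_comb n d" "v = ind d" unfolding St_def SS_def by auto
      have "v \<in> SR n" using that BR by (auto intro: M.span_base)
      then show False using std_not_in_SR[OF n d(1)] d(2) by simp
    qed
    then show ?thesis by auto
  qed
  have spanB: "M.span B = SR n"
    using BR RB by (metis M.span_mono M.span_span subset_antisym M.span_minimal M.subspace_span)
  have span_eq: "M.span (B \<union> St) = M.span (combs_space n)"
  proof -
    have "M.span (B \<union> St) = M.span (relations n \<union> St)"
    proof
      show "M.span (B \<union> St) \<subseteq> M.span (relations n \<union> St)"
        using BR by (intro M.span_mono) auto
      show "M.span (relations n \<union> St) \<subseteq> M.span (B \<union> St)"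
      proof (rule M.span_minimal[OF _ M.subspace_span])
        show "relations n \<union> St \<subseteq> M.span (B \<union> St)"
        proof
          fix v assume "v \<in> relations n \<union> St"
          then show "v \<in> M.span (B \<union> St)"
          proof
            assume "v \<in> relations n"
            then have "v \<in> M.span B" using RB by auto
            then show ?thesis using M.span_mono[of B "B \<union> St"] by auto
          next
            assume "v \<in> St"
            then show ?thesis by (auto intro: M.span_base)
          qed
        qed
      qed
    qed
    also have "relations n \<union> St = SS n \<union> relations n" unfolding St_def by auto
    finally show ?thesis using partA[OF n] by (simp only:)
  qed
  have indBS: "M.independent (B \<union> St)"
  proof (rule M.independent_if_scalars_zero)
    show "finite (B \<union> St)" using fB fSt by simp
    fix c v assume sum0: "(\<Sum>v\<in>B \<union> St. sc (c v) v) = 0" and "v \<in> B \<union> St"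
    have split: "(\<Sum>v\<in>B \<union> St. sc (c v) v) = (\<Sum>v\<in>B. sc (c v) v) + (\<Sum>v\<in>St. sc (c v) v)"
      by (rule sum.union_disjoint[OF fB fSt disj])
    have inB: "(\<Sum>v\<in>B. sc (c v) v) \<in> SR n"
      using BR by (intro M.span_sum M.span_scale M.span_base) auto
    have "(\<Sum>v\<in>St. sc (c v) v) = - (\<Sum>v\<in>B. sc (c v) v)" using sum0 split by (simp add: eq_neg_iff_add_eq_0 add.commute)
    then have inSt: "(\<Sum>v\<in>St. sc (c v) v) \<in> SR n" using M.span_neg[OF inB] by simp
    have re: "(\<Sum>v\<in>St. sc (c v) v) = (\<Sum>d\<in>{c. standard_comb n c}. sc (c (ind d)) (ind d))"
      unfolding St_def SS_def using sum.reindex[OF inj_on_subset[OF ind_inj, of "{c. standard_comb n c}"], of "\<lambda>v. sc (c v) v"]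
      by simp
    have zSt: "\<forall>d. standard_comb n d \<longrightarrow> c (ind d) = 0"
      by (rule partB[OF n]) (use inSt re in simp)
    then have cSt0: "\<forall>v\<in>St. c v = 0" unfolding St_def SS_def by auto
    then have "(\<Sum>v\<in>St. sc (c v) v) = 0" by (simp add: sc_def fun_eq_iff sum_fun_apply)
    then have "(\<Sum>v\<in>B. sc (c v) v) = 0" using sum0 split by simp
    then have cB0: "\<forall>v\<in>B. c v = 0" using M.independentD[OF indB fB subset_refl] by blast
    show "c v = 0" using cSt0 cB0 \<open>v \<in> B \<union> St\<close> by auto
  qed
  have "M.dim (combs_space n) = M.dim (B \<union> St)" using span_eq by (metis M.dim_span)
  also have "\<dots> = card (B \<union> St)" by (rule M.dim_eq_card_independent[OF indBS])
  also have "\<dots> = card B + card St" by (rule card_Un_disjoint[OF fB fSt disj])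
  finally show ?thesis unfolding rho_dim_def using cB cSt by simp
qed


definition la :: "nat \<Rightarrow> nat list" where "la n = replicate (n - 1) 2 @ [1]"

lemma la_len: "n \<ge> 1 \<Longrightarrow> length (la n) = n" by (simp add: la_def)

lemma la_nth: "n \<ge> 1 \<Longrightarrow> r < n \<Longrightarrow> la n ! r = (if r < n - 1 then 2 else 1)"
  by (auto simp: la_def nth_append)

lemma la_sum: "n \<ge> 1 \<Longrightarrow> sum_list (la n) = 2 * n - 1"
  by (simp add: la_def sum_list_replicate)

lemma cells: "n \<ge> 1 \<Longrightarrow> (r, c) \<in> young_cells (la n) \<longleftrightarrow> (c = 0 \<and> r < n) \<or> (c = 1 \<and> r < n - 1)"
  unfolding young_cells_def using la_nth[of n r] la_len[of n] by (auto split: if_splits)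

definition gT :: "nat \<Rightarrow> comb \<Rightarrow> (nat \<times> nat \<Rightarrow> nat)" where
  "gT n c = (\<lambda>(r, k). if k = 0 \<and> r < n then fst c ! r else if k = 1 \<and> r < n - 1 then snd c ! r else 0)"

definition hT :: "nat \<Rightarrow> (nat \<times> nat \<Rightarrow> nat) \<Rightarrow> comb" where
  "hT n T = (map (\<lambda>r. T (r, 0)) [0..<n], map (\<lambda>r. T (r, 1)) [0..<n - 1])"

lemma cells_img:
  assumes n: "n \<ge> 1" and len: "length xs = n" "length ys = n - 1"
  shows "gT n (xs, ys) ` young_cells (la n) = set xs \<union> set ys"
proof
  show "gT n (xs, ys) ` young_cells (la n) \<subseteq> set xs \<union> set ys"
  proof
    fix v assume "v \<in> gT n (xs, ys) ` young_cells (la n)"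
    then obtain r k where rk: "(r, k) \<in> young_cells (la n)" "v = gT n (xs, ys) (r, k)" by auto
    then show "v \<in> set xs \<union> set ys" using cells[OF n, of r k] len by (auto simp: gT_def)
  qed
  show "set xs \<union> set ys \<subseteq> gT n (xs, ys) ` young_cells (la n)"
  proof
    fix v assume "v \<in> set xs \<union> set ys"
    then consider (a) r where "r < n" "v = xs ! r" | (b) r where "r < n - 1" "v = ys ! r"
      using len by (auto simp: in_set_conv_nth)
    then show "v \<in> gT n (xs, ys) ` young_cells (la n)"
    proof cases
      case a
      then have "(r, 0) \<in> young_cells (la n)" "v = gT n (xs, ys) (r, 0)" using cells[OF n] by (auto simp: gT_def)
      then show ?thesis by blast
    next
      case b
      then have "(r, 1) \<in> young_cells (la n)" "v = gT n (xs, ys) (r, 1)" using cells[OF n] by (auto simp: gT_def)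
      then show ?thesis by blast
    qed
  qed
qed

lemma gT_inj_cells:
  assumes n: "n \<ge> 1" and len: "length xs = n" "length ys = n - 1" and d: "distinct (xs @ ys)"
  shows "inj_on (gT n (xs, ys)) (young_cells (la n))"
proof (rule inj_onI)
  fix p q assume p: "p \<in> young_cells (la n)" and q: "q \<in> young_cells (la n)"
    and e: "gT n (xs, ys) p = gT n (xs, ys) q"
  obtain r k where pp: "p = (r, k)" by (cases p)
  obtain r' k' where qq: "q = (r', k')" by (cases q)
  have dx: "distinct xs" "distinct ys" "set xs \<inter> set ys = {}" using d by auto
  have c1: "(k = 0 \<and> r < n) \<or> (k = 1 \<and> r < n - 1)" using p pp cells[OF n] by auto
  have c2: "(k' = 0 \<and> r' < n) \<or> (k' = 1 \<and> r' < n - 1)" using q qq cells[OF n] by auto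
  have xy: "xs ! i \<noteq> ys ! j" if "i < n" "j < n - 1" for i j
  proof
    assume "xs ! i = ys ! j"
    moreover have "xs ! i \<in> set xs" "ys ! j \<in> set ys" using that len by auto
    ultimately show False using dx(3) by auto
  qed
  show "p = q"
    using c1 c2 e dx len xy unfolding pp qq gT_def
    by (auto simp: nth_eq_iff_index_eq) (metis xy)+
qed

lemma gT_SYT:
  assumes n: "n \<ge> 1" and s: "standard_comb n (xs, ys)"
  shows "gT n (xs, ys) \<in> SYT (la n)"
proof -
  have v: "length xs = n" "length ys = n - 1" "distinct (xs @ ys)" "set (xs @ ys) = {1..2*n-1}"
    using s by (auto simp: standard_comb_def valid_comb_def)
  have sx: "sorted_wrt (<) xs" "sorted_wrt (<) ys" and row: "\<forall>j<n - 1. xs ! j < ys ! j"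
    using s by (auto simp: standard_comb_def)
  have bij: "bij_betw (gT n (xs, ys)) (young_cells (la n)) {1..sum_list (la n)}"
    unfolding bij_betw_def using gT_inj_cells[OF n v(1,2,3)] cells_img[OF n v(1,2)] v(4) la_sum[OF n] by simp
  have zero: "\<forall>x. x \<notin> young_cells (la n) \<longrightarrow> gT n (xs, ys) x = 0"
    using cells[OF n] by (auto simp: gT_def)
  have rowc: "\<forall>r c. (r, c) \<in> young_cells (la n) \<and> (r, Suc c) \<in> young_cells (la n) \<longrightarrow>
      gT n (xs, ys) (r, c) < gT n (xs, ys) (r, Suc c)"
    using cells[OF n] row by (auto simp: gT_def)
  have colc: "\<forall>r c. (r, c) \<in> young_cells (la n) \<and> (Suc r, c) \<in> young_cells (la n) \<longrightarrow>
      gT n (xs, ys) (r, c) < gT n (xs, ys) (Suc r, c)"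
  proof (intro allI impI)
    fix r c assume a: "(r, c) \<in> young_cells (la n) \<and> (Suc r, c) \<in> young_cells (la n)"
    then have "(c = 0 \<and> Suc r < n) \<or> (c = 1 \<and> Suc r < n - 1)" using cells[OF n] by auto
    then show "gT n (xs, ys) (r, c) < gT n (xs, ys) (Suc r, c)"
    proof
      assume "c = 0 \<and> Suc r < n"
      then show ?thesis using sorted_wrt_nth_less[OF sx(1), of r "Suc r"] v by (auto simp: gT_def)
    next
      assume "c = 1 \<and> Suc r < n - 1"
      then show ?thesis using sorted_wrt_nth_less[OF sx(2), of r "Suc r"] v by (auto simp: gT_def)
    qed
  qed
  show ?thesis unfolding SYT_def using bij zero rowc colc by blast
qed


lemma hT_props:
  assumes n: "n \<ge> 1" and T: "T \<in> SYT (la n)"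
  shows "standard_comb n (hT n T) \<and> gT n (hT n T) = T"
proof -
  define xs where "xs = map (\<lambda>r. T (r, 0)) [0..<n]"
  define ys where "ys = map (\<lambda>r. T (r, 1)) [0..<n - 1]"
  have h: "hT n T = (xs, ys)" unfolding hT_def xs_def ys_def by simp
  have bij: "bij_betw T (young_cells (la n)) {1..2*n-1}" and zero: "\<And>x. x \<notin> young_cells (la n) \<Longrightarrow> T x = 0"
    and rowc: "\<And>r c. (r, c) \<in> young_cells (la n) \<Longrightarrow> (r, Suc c) \<in> young_cells (la n) \<Longrightarrow> T (r, c) < T (r, Suc c)"
    and colc: "\<And>r c. (r, c) \<in> young_cells (la n) \<Longrightarrow> (Suc r, c) \<in> young_cells (la n) \<Longrightarrow> T (r, c) < T (Suc r, c)"
    using T la_sum[OF n] unfolding SYT_def by auto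
  have len: "length xs = n" "length ys = n - 1" unfolding xs_def ys_def by simp_all
  have xsn: "xs ! r = T (r, 0)" if "r < n" for r using that unfolding xs_def by simp
  have ysn: "ys ! r = T (r, 1)" if "r < n - 1" for r using that unfolding ys_def by simp
  have g: "gT n (xs, ys) = T"
  proof
    fix p :: "nat \<times> nat"
    obtain r k where p: "p = (r, k)" by (cases p)
    show "gT n (xs, ys) p = T p"
    proof (cases "p \<in> young_cells (la n)")
      case True
      then have "(k = 0 \<and> r < n) \<or> (k = 1 \<and> r < n - 1)" using cells[OF n] p by auto
      then show ?thesis using xsn ysn p by (auto simp: gT_def)
    next
      case False
      then have "\<not> ((k = 0 \<and> r < n) \<or> (k = 1 \<and> r < n - 1))" using cells[OF n] p by auto
      then show ?thesis using zero[OF False] p by (auto simp: gT_def)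
    qed
  qed
  have inj: "inj_on T (young_cells (la n))" using bij by (simp add: bij_betw_def)
  have injD: "\<And>p q. p \<in> young_cells (la n) \<Longrightarrow> q \<in> young_cells (la n) \<Longrightarrow> T p = T q \<Longrightarrow> p = q"
    using inj by (meson inj_onD)
  have c0: "(r, 0) \<in> young_cells (la n)" if "r < n" for r using cells[OF n] that by simp
  have c1: "(r, 1) \<in> young_cells (la n)" if "r < n - 1" for r using cells[OF n] that by simp
  have img: "T ` young_cells (la n) = {1..2*n-1}" using bij by (simp add: bij_betw_def)
  have dist: "distinct (xs @ ys)"
  proof -
    have "distinct xs" unfolding distinct_conv_nth
    proof (intro allI impI)
      fix i j assume "i < length xs" "j < length xs" "i \<noteq> j"
      then show "xs ! i \<noteq> xs ! j" using injD[OF c0[of i] c0[of j]] len xsn by auto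
    qed
    moreover have "distinct ys" unfolding distinct_conv_nth
    proof (intro allI impI)
      fix i j assume "i < length ys" "j < length ys" "i \<noteq> j"
      then show "ys ! i \<noteq> ys ! j" using injD[OF c1[of i] c1[of j]] len ysn by auto
    qed
    moreover have "set xs \<inter> set ys = {}"
    proof -
      have xy: "xs ! i \<noteq> ys ! j" if "i < n" "j < n - 1" for i j
        using that injD[OF c0[of i] c1[of j]] xsn ysn by auto
      have "x \<notin> set ys" if x: "x \<in> set xs" for x
      proof
        assume y: "x \<in> set ys"
        obtain i where i: "i < n" "x = xs ! i" using x len by (auto simp: in_set_conv_nth)
        obtain j where j: "j < n - 1" "x = ys ! j" using y len by (auto simp: in_set_conv_nth)
        show False using xy[OF i(1) j(1)] i j by simp
      qed
      then show ?thesis by blast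
    qed
    ultimately show ?thesis by simp
  qed
  have st: "set (xs @ ys) = {1..2*n-1}"
    using cells_img[OF n len] g img by simp
  have sx: "sorted_wrt (<) xs"
    unfolding sorted_wrt_iff_nth_Suc_transp[OF transp_on_less]
  proof (intro allI impI)
    fix i assume "Suc i < length xs"
    then show "xs ! i < xs ! Suc i" using colc[OF c0[of i] c0[of "Suc i"]] len xsn by simp
  qed
  have sy: "sorted_wrt (<) ys"
    unfolding sorted_wrt_iff_nth_Suc_transp[OF transp_on_less]
  proof (intro allI impI)
    fix i assume "Suc i < length ys"
    then show "ys ! i < ys ! Suc i" using colc[OF c1[of i] c1[of "Suc i"]] len ysn by simp
  qed
  have row: "\<forall>j<n - 1. xs ! j < ys ! j"
  proof (intro allI impI)
    fix j assume j: "j < n - 1"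
    then have "T (j, 0) < T (j, Suc 0)" using rowc[of j 0] c0[of j] c1[OF j] by simp
    then show "xs ! j < ys ! j" using xsn ysn j by simp
  qed
  have "standard_comb n (xs, ys)" unfolding standard_comb_def valid_comb_def
    using len dist st sx sy row by simp
  then show ?thesis using g h by simp
qed

lemma gT_inj: "n \<ge> 1 \<Longrightarrow> inj_on (gT n) {c. standard_comb n c}"
proof (rule inj_onI)
  fix c d assume n: "n \<ge> 1" and c: "c \<in> {c. standard_comb n c}" and d: "d \<in> {c. standard_comb n c}"
    and e: "gT n c = gT n d"
  obtain xs ys where cc: "c = (xs, ys)" by (cases c)
  obtain xs' ys' where dd: "d = (xs', ys')" by (cases d)
  have len: "length xs = n" "length ys = n - 1" "length xs' = n" "length ys' = n - 1"
    using c d cc dd by (auto simp: standard_comb_def valid_comb_def)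
  have "xs ! r = xs' ! r" if "r < n" for r using fun_cong[OF e, of "(r, 0)"] that cc dd by (simp add: gT_def)
  then have "xs = xs'" using len by (simp add: list_eq_iff_nth_eq)
  moreover have "ys ! r = ys' ! r" if "r < n - 1" for r using fun_cong[OF e, of "(r, 1)"] that cc dd by (simp add: gT_def)
  then have "ys = ys'" using len by (simp add: list_eq_iff_nth_eq)
  ultimately show "c = d" using cc dd by simp
qed

lemma card_SYT:
  assumes n: "n \<ge> 1"
  shows "card {c. standard_comb n c} = card (SYT (replicate (n - 1) 2 @ [1]))"
proof -
  have "bij_betw (gT n) {c. standard_comb n c} (SYT (la n))"
    unfolding bij_betw_def
  proof
    show "inj_on (gT n) {c. standard_comb n c}" by (rule gT_inj[OF n])
    show "gT n ` {c. standard_comb n c} = SYT (la n)"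
    proof
      show "gT n ` {c. standard_comb n c} \<subseteq> SYT (la n)"
        using gT_SYT[OF n] by auto
      show "SYT (la n) \<subseteq> gT n ` {c. standard_comb n c}"
      proof
        fix T assume "T \<in> SYT (la n)"
        then have "standard_comb n (hT n T) \<and> gT n (hT n T) = T" by (rule hT_props[OF n])
        then show "T \<in> gT n ` {c. standard_comb n c}" by (metis image_eqI mem_Collect_eq)
      qed
    qed
  qed
  then show ?thesis unfolding la_def by (rule bij_betw_same_card)
qed


theorem mainTheorem9:
  fixes n :: nat
  assumes "n \<ge> 2"
  shows "module.span sc (ind ` {c. standard_comb n c} \<union> relations n) = module.span sc (combs_space n)
       \<and> (\<forall>a :: comb \<Rightarrow> complex.
            (\<Sum>c\<in>{c. standard_comb n c}. sc (a c) (ind c)) \<in> module.span sc (relations n)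
            \<longrightarrow> (\<forall>c. standard_comb n c \<longrightarrow> a c = 0))
       \<and> rho_dim n = card (SYT (replicate (n - 1) 2 @ [1]))"
proof -
  have n: "n \<ge> 1" using assms by simp
  have 1: "module.span sc (ind ` {c. standard_comb n c} \<union> relations n) = module.span sc (combs_space n)"
    using partA[OF n] unfolding SS_def .
  have 2: "\<forall>a :: comb \<Rightarrow> complex.
            (\<Sum>c\<in>{c. standard_comb n c}. sc (a c) (ind c)) \<in> module.span sc (relations n)
            \<longrightarrow> (\<forall>c. standard_comb n c \<longrightarrow> a c = 0)"
    using partB[OF n] by blast
  have 3: "rho_dim n = card (SYT (replicate (n - 1) 2 @ [1]))"
    using partC_dim[OF n] card_SYT[OF n] by simp
  show ?thesis using 1 2 3 by blast
qed

end
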